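(* Let $\rho$ be a state on $\mathcal H_A\otimes\mathcal H_B$ with $\dim\mathcal H_A,\dim\mathcal H_B<\infty$, $d=\dim\mathcal H_B$, and let $\mathcal C(\rho)$ be its maximal steered coherence. Then $\mathcal C(\rho)=0$ if and only if $\rho$ is classical on Bob's side (zero discord for Bob), i.e. there exist an orthonormal basis $\{|\xi_i\rangle\}_{i=1}^d$ of $\mathcal H_B$, probabilities $p_i\ge 0$ with $\sum_i p_i=1$, and states $\rho_i^A$ on $\mathcal H_A$ such that $$\rho=\sum_{i=1}^{d}p_i\,\rho_i^A\otimes|\xi_i\rangle\langle\xi_i|.$$
   Context: For a POVM element $M$ on $\mathcal H_A$ ($0\le M\le \mathbb 1$) with $p_M:=\mathrm{tr}(M\otimes\mathbb 1\,\rho)>0$, Bob's steered state is $\rho_B^M:=\mathrm{tr}_A(M\otimes\mathbb 1\,\rho)/p_M$. Let $\rho_B=\mathrm{tr}_A\rho$. The $\ell_1$-coherence of a state $\sigma$ in an orthonormal basis $\Xi=\{|\xi_i\rangle\}$ is $C(\sigma,\Xi)=\sum_{i\neq j}|\langle\xi_i|\sigma|\xi_j\rangle|$. The maximal steered coherence is $$\mathcal C(\rho)=\inf_{\Xi}\ \max_{M}\ \frac{1}{p_M}\sum_{i\neq j}\big|\langle\xi_i|\mathrm{tr}_A(M\otimes \mathbb 1\,\rho)|\xi_j\rangle\big|,$$ where the infimum is over all orthonormal eigenbases $\Xi$ of $\rho_B$ (if $\rho_B$ is non-degenerate, this eigenbasis is unique up to phases and no infimum is needed) and the maximum is over POVM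 elements $M$ on $\mathcal H_A$ with $p_M>0$. *)

theory Defs
  imports Complex_Main
begin

text \<open>Operators on the finite-dimensional Hilbert space with orthonormal (computational)
basis indexed by a finite type 'n are represented by their matrices 'n \<Rightarrow> 'n \<Rightarrow> complex.
H_A has basis indexed by 'a, H_B by 'b, and H_A \<otimes> H_B by 'a \<times> 'b.\<close>

type_synonym 'n cop = "'n \<Rightarrow> 'n \<Rightarrow> complex"

definition op_mult :: "'n::finite cop \<Rightarrow> 'n cop \<Rightarrow> 'n cop" where
  "op_mult A B = (\<lambda>i k. \<Sum>j\<in>UNIV. A i j * B j k)"

definition op_trace :: "'n::finite cop \<Rightarrow> complex" where
  "op_trace A = (\<Sum>i\<in>UNIV. A i i)"

definition op_id :: "'n cop" where
  "op_id = (\<lambda>i j. if i = j then 1 else 0)"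

definition quad_form :: "'n::finite cop \<Rightarrow> ('n \<Rightarrow> complex) \<Rightarrow> complex" where
  "quad_form A v = (\<Sum>i\<in>UNIV. \<Sum>j\<in>UNIV. cnj (v i) * A i j * v j)"

definition psd :: "'n::finite cop \<Rightarrow> bool" where
  "psd A \<longleftrightarrow> (\<forall>v. quad_form A v \<in> \<real> \<and> 0 \<le> Re (quad_form A v))"

definition is_state :: "'n::finite cop \<Rightarrow> bool" where
  "is_state A \<longleftrightarrow> psd A \<and> op_trace A = 1"

definition tensor :: "'a cop \<Rightarrow> 'b cop \<Rightarrow> ('a \<times> 'b) cop" where
  "tensor A B = (\<lambda>(i, j) (k, l). A i k * B j l)"

definition ptrace_A :: "('a::finite \<times> 'b) cop \<Rightarrow> 'b cop" where
  "ptrace_A R = (\<lambda>j l. \<Sum>i\<in>UNIV. R (i, j) (i, l))"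

definition povm_elem :: "'n::finite cop \<Rightarrow> bool" where
  "povm_elem M \<longleftrightarrow> psd M \<and> psd (\<lambda>i j. op_id i j - M i j)"

definition cinner :: "('n::finite \<Rightarrow> complex) \<Rightarrow> ('n \<Rightarrow> complex) \<Rightarrow> complex" where
  "cinner u v = (\<Sum>i\<in>UNIV. cnj (u i) * v i)"

text \<open>An orthonormal basis of C^'n, given as a family of CARD('n) orthonormal vectors
(indexed by 'n); such a family is automatically a basis.\<close>
definition orthonormal_basis :: "('n::finite \<Rightarrow> ('n \<Rightarrow> complex)) \<Rightarrow> bool" where
  "orthonormal_basis \<xi> \<longleftrightarrow> (\<forall>i j. cinner (\<xi> i) (\<xi> j) = (if i = j then 1 else 0))"

definition is_eigenbasis :: "'n::finite cop \<Rightarrow> ('n \<Rightarrow> ('n \<Rightarrow> complex)) \<Rightarrow> bool" where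
  "is_eigenbasis S \<xi> \<longleftrightarrow> orthonormal_basis \<xi> \<and>
     (\<forall>i. \<exists>c. \<forall>k. (\<Sum>l\<in>UNIV. S k l * \<xi> i l) = c * \<xi> i k)"

definition mat_elem :: "('n::finite \<Rightarrow> ('n \<Rightarrow> complex)) \<Rightarrow> 'n cop \<Rightarrow> 'n \<Rightarrow> 'n \<Rightarrow> complex" where
  "mat_elem \<xi> S i j = (\<Sum>k\<in>UNIV. \<Sum>l\<in>UNIV. cnj (\<xi> i k) * S k l * \<xi> j l)"

definition ketbra :: "('n \<Rightarrow> complex) \<Rightarrow> 'n cop" where
  "ketbra v = (\<lambda>k l. v k * cnj (v l))"

text \<open>p_M = tr((M \<otimes> 1) rho) (real for POVM elements and states; we take the real part).\<close>
definition prob_M :: "('a::finite \<times> 'b::finite) cop \<Rightarrow> 'a cop \<Rightarrow> real" where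
  "prob_M R M = Re (op_trace (op_mult (tensor M op_id) R))"

definition steered_unnorm :: "('a::finite \<times> 'b::finite) cop \<Rightarrow> 'a cop \<Rightarrow> 'b cop" where
  "steered_unnorm R M = ptrace_A (op_mult (tensor M op_id) R)"

definition steered_coherence ::
  "('a::finite \<times> 'b::finite) cop \<Rightarrow> ('b \<Rightarrow> ('b \<Rightarrow> complex)) \<Rightarrow> 'a cop \<Rightarrow> real" where
  "steered_coherence R \<xi> M =
     (\<Sum>i\<in>UNIV. \<Sum>j\<in>UNIV. if i \<noteq> j then cmod (mat_elem \<xi> (steered_unnorm R M) i j) else 0)
       / prob_M R M"

definition max_steered_coherence :: "('a::finite \<times> 'b::finite) cop \<Rightarrow> real" where
  "max_steered_coherence R =
     Inf {(SUP M \<in> {M. povm_elem M \<and> prob_M R M > 0}. steered_coherence R \<xi> M)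
          | \<xi>. is_eigenbasis (ptrace_A R) \<xi>}"

end

theory Submission
  imports Defs "HOL-Analysis.Analysis"
begin
definition app :: "'n::finite cop \<Rightarrow> ('n \<Rightarrow> complex) \<Rightarrow> ('n \<Rightarrow> complex)" where
  "app A v = (\<lambda>k. \<Sum>l\<in>UNIV. A k l * v l)"

definition bil :: "'n::finite cop \<Rightarrow> ('n \<Rightarrow> complex) \<Rightarrow> ('n \<Rightarrow> complex) \<Rightarrow> complex" where
  "bil A x y = (\<Sum>i\<in>UNIV. \<Sum>j\<in>UNIV. cnj (x i) * A i j * y j)"

definition herm :: "'n::finite cop \<Rightarrow> bool" where
  "herm A \<longleftrightarrow> (\<forall>i j. A i j = cnj (A j i))"

definition uvec :: "'n \<Rightarrow> 'n \<Rightarrow> complex" where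
  "uvec i = (\<lambda>x. if x = i then 1 else 0)"

lemma quad_bil: "quad_form A v = bil A v v"
  by (simp add: quad_form_def bil_def)

lemma bil_cinner: "bil A x y = cinner x (app A y)"
  by (simp add: bil_def cinner_def app_def sum_distrib_left mult.assoc)

lemma if0_simps:
  fixes x y :: complex
  shows "x * (if P then y else 0) = (if P then x * y else 0)"
    "(if P then y else 0) * x = (if P then y * x else 0)"
    "cnj (if P then y else 0) = (if P then cnj y else 0)"
  by auto

lemma quad_two:
  fixes A :: "'n::finite cop"
  assumes "i \<noteq> j"
  shows "quad_form A (\<lambda>x. if x = i then a else if x = j then b else 0) =
     cnj a * A i i * a + cnj a * A i j * b + cnj b * A j i * a + cnj b * A j j * b"
proof -
  have v: "(\<lambda>x. if x = i then a else if x = j then b else 0) = (\<lambda>x. (if x = i then a else 0) + (if x = j then b else 0))"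
    using assms by auto
  show ?thesis unfolding v quad_form_def
    using assms
    by (simp add: ring_distribs sum.distrib if0_simps sum.delta')
qed

lemma quad_one:
  fixes A :: "'n::finite cop"
  shows "quad_form A (\<lambda>x. if x = i then a else 0) = cnj a * A i i * a"
  unfolding quad_form_def
  by (simp add: if0_simps sum.delta')

lemma psd_herm:
  fixes A :: "'n::finite cop"
  assumes "psd A" shows "herm A"
  unfolding herm_def
proof (intro allI)
  fix i j
  have r: "\<And>v. Im (quad_form A v) = 0" using assms unfolding psd_def
    by (simp add: complex_is_Real_iff)
  show "A i j = cnj (A j i)"
  proof (cases "i = j")
    case True
    have "Im (A i i) = 0" using r[of "\<lambda>x. if x = i then 1 else 0"] by (simp add: quad_one)
    then show ?thesis using True by (simp add: complex_eq_iff)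
  next
    case False
    have ii: "Im (A i i) = 0" using r[of "\<lambda>x. if x = i then 1 else 0"] by (simp add: quad_one)
    have jj: "Im (A j j) = 0" using r[of "\<lambda>x. if x = j then 1 else 0"] by (simp add: quad_one)
    have 1: "Im (A i j + A j i) = 0" using r[of "\<lambda>x. if x = i then 1 else if x = j then 1 else 0"] False ii jj
      by (simp add: quad_two)
    have 2: "Re (A i j - A j i) = 0" using r[of "\<lambda>x. if x = i then 1 else if x = j then \<i> else 0"] False ii jj
      by (simp add: quad_two algebra_simps)
    show ?thesis using 1 2 by (simp add: complex_eq_iff)
  qed
qed

lemma bil_add_left: "bil A (\<lambda>i. x i + y i) z = bil A x z + bil A y z"
  by (simp add: bil_def ring_distribs sum.distrib)
lemma bil_add_right: "bil A z (\<lambda>i. x i + y i) = bil A z x + bil A z y"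
  by (simp add: bil_def ring_distribs sum.distrib)
lemma bil_scale_left: "bil A (\<lambda>i. c * x i) z = cnj c * bil A x z"
  by (simp add: bil_def sum_distrib_left algebra_simps)
lemma bil_scale_right: "bil A z (\<lambda>i. c * x i) = c * bil A z x"
  by (simp add: bil_def sum_distrib_left algebra_simps)
lemma bil_herm: "herm A \<Longrightarrow> bil A y x = cnj (bil A x y)"
proof -
  assume h: "herm A"
  have hA: "cnj (A i j) = A j i" for i j using h unfolding herm_def by (metis complex_cnj_cnj)
  have "cnj (bil A x y) = (\<Sum>i\<in>UNIV. \<Sum>j\<in>UNIV. x i * A j i * cnj (y j))"
    unfolding bil_def cnj_sum using h unfolding herm_def
    by (intro sum.cong refl) (simp add: hA)
  also have "\<dots> = (\<Sum>j\<in>UNIV. \<Sum>i\<in>UNIV. x i * A j i * cnj (y j))"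
    by (rule sum.swap)
  also have "\<dots> = bil A y x"
    unfolding bil_def by (intro sum.cong refl) (simp add: mult.commute mult.left_commute)
  finally show ?thesis by simp
qed

lemma cinner_add_right: "cinner z (\<lambda>i. x i + y i) = cinner z x + cinner z y"
  by (simp add: cinner_def ring_distribs sum.distrib)
lemma cinner_add_left: "cinner (\<lambda>i. x i + y i) z = cinner x z + cinner y z"
  by (simp add: cinner_def ring_distribs sum.distrib)
lemma cinner_scale_right: "cinner z (\<lambda>i. c * x i) = c * cinner z x"
  by (simp add: cinner_def sum_distrib_left algebra_simps)
lemma cinner_scale_left: "cinner (\<lambda>i. c * x i) z = cnj c * cinner x z"
  by (simp add: cinner_def sum_distrib_left algebra_simps)
lemma cinner_cnj: "cnj (cinner x y) = cinner y x"
  by (simp add: cinner_def mult.commute)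
lemma cnj_mult_self: "cnj z * z = complex_of_real ((cmod z)^2)"
  by (subst mult.commute) (simp add: complex_mult_cnj cmod_power2)

lemma cinner_self_real: "cinner x x = of_real (\<Sum>i\<in>UNIV. (cmod (x i))^2)"
  unfolding cinner_def of_real_sum by (simp add: cnj_mult_self)

lemma bil_psd_nonneg: "psd A \<Longrightarrow> 0 \<le> Re (bil A x x) \<and> Im (bil A x x) = 0"
  unfolding psd_def quad_bil by (simp add: complex_is_Real_iff)

lemma psd_amgm:
  fixes A :: "'n::finite cop"
  assumes "psd A"
  shows "2 * cmod (bil A x y) \<le> Re (bil A x x) + Re (bil A y y)"
proof (cases "bil A x y = 0")
  case True then show ?thesis using bil_psd_nonneg[OF assms, of x] bil_psd_nonneg[OF assms, of y] by simp
next
  case False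
  define b where "b = bil A x y"
  define r where "r = cmod b"
  have r0: "r \<noteq> 0" using False by (simp add: r_def b_def)
  define w where "w = - cnj b / of_real r"
  have h: "herm A" using psd_herm assms by blast
  have bb: "cnj b * b = of_real (r * r)" by (simp add: cnj_mult_self r_def power2_eq_square)
  have wb: "w * b = - of_real r"
  proof -
    have "w * b = - (cnj b * b) / of_real r" by (simp add: w_def)
    also have "\<dots> = - of_real r" using r0 by (simp add: bb)
    finally show ?thesis .
  qed
  have cwb: "cnj w * cnj b = - of_real r" using arg_cong[OF wb, of cnj] by simp
  have ww: "cnj w * w = 1"
  proof -
    have "cnj w * w = (cnj b * b) / (of_real r * of_real r)" by (simp add: w_def)
    also have "\<dots> = 1" using r0 by (simp add: bb)
    finally show ?thesis .
  qed
  have yx: "bil A y x = cnj b" using bil_herm[OF h, of x y] by (simp add: b_def)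
  have "bil A (\<lambda>i. x i + w * y i) (\<lambda>i. x i + w * y i)
      = bil A x x + w * b + cnj w * cnj b + (cnj w * w) * bil A y y"
    by (simp only: bil_add_left bil_add_right bil_scale_left bil_scale_right yx b_def[symmetric])
      (simp add: algebra_simps)
  also have "\<dots> = bil A x x - 2 * of_real r + bil A y y"
    by (simp only: wb cwb ww) simp
  finally have e: "bil A (\<lambda>i. x i + w * y i) (\<lambda>i. x i + w * y i) = bil A x x - 2 * of_real r + bil A y y" .
  have "0 \<le> Re (bil A (\<lambda>i. x i + w * y i) (\<lambda>i. x i + w * y i))"
    using bil_psd_nonneg[OF assms] by blast
  then have "0 \<le> Re (bil A x x - 2 * of_real r + bil A y y)" by (simp only: e)
  then show ?thesis by (simp add: b_def r_def)
qed

definition tov :: "('n::finite \<Rightarrow> complex) \<Rightarrow> complex^'n" where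
  "tov x = (\<chi> i. x i)"

lemma tov_nth[simp]: "tov x $ i = x i"
  by (simp add: tov_def)

lemma tov_inner: "tov x \<bullet> tov y = Re (cinner x y)"
  unfolding inner_vec_def cinner_def Re_sum
  by (rule sum.cong) (simp_all add: inner_complex_def)

lemma cinner_self_pos: "x \<noteq> (\<lambda>_. 0) \<Longrightarrow> 0 < Re (cinner x x)"
proof -
  assume "x \<noteq> (\<lambda>_. 0)"
  then obtain i where i: "x i \<noteq> 0" by auto
  have "0 < (\<Sum>j\<in>UNIV. (cmod (x j))^2)"
    by (rule sum_pos2[where i=i]) (use i in auto)
  then show ?thesis by (simp add: cinner_self_real)
qed

lemma cinner_self_Im: "Im (cinner x x) = 0"
  by (simp add: cinner_self_real)

lemma ortho_complete:
  fixes \<xi> :: "'n::finite \<Rightarrow> 'n \<Rightarrow> complex"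
  assumes on: "orthonormal_basis \<xi>" and h: "\<forall>i. cinner (\<xi> i) x = 0"
  shows "x = (\<lambda>_. 0)"
proof (rule ccontr)
  assume x0: "x \<noteq> (\<lambda>_. 0)"
  define v :: "'n option \<Rightarrow> 'n \<Rightarrow> complex" where "v qq = (case qq of Some i \<Rightarrow> \<xi> i | None \<Rightarrow> x)" for qq
  define c :: "bool \<Rightarrow> complex" where "c b = (if b then 1 else \<i>)" for b
  define f :: "'n option \<times> bool \<Rightarrow> complex^'n" where "f p = tov (\<lambda>k. c (snd p) * v (fst p) k)" for p
  have on': "\<And>i j. cinner (\<xi> i) (\<xi> j) = (if i = j then 1 else 0)" using on by (simp add: orthonormal_basis_def)
  have vv: "cinner (v o1) (v o2) = 0" if ne: "o1 \<noteq> o2" for o1 o2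
  proof (cases o1)
    case None
    then obtain j where "o2 = Some j" using ne None by (cases o2) auto
    then show ?thesis using None h cinner_cnj[of "\<xi> j" x] by (simp add: v_def)
  next
    case (Some i)
    then show ?thesis using ne h on' by (cases o2) (auto simp: v_def)
  qed
  have vnz: "v qq \<noteq> (\<lambda>_. 0)" for qq
  proof (cases qq)
    case None then show ?thesis using x0 by (simp add: v_def)
  next
    case (Some i)
    have "cinner (\<xi> i) (\<xi> i) = 1" using on' by simp
    then have "\<xi> i \<noteq> (\<lambda>_. 0)" by (auto simp: cinner_def)
    then show ?thesis using Some by (simp add: v_def)
  qed
  have cc: "c b * cnj (c b) = 1" for b by (simp add: c_def)
  have finner: "f p \<bullet> f q = Re (cnj (c (snd p)) * c (snd q) * cinner (v (fst p)) (v (fst q)))" for p q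
    by (simp add: f_def tov_inner cinner_scale_left cinner_scale_right) (simp add: algebra_simps)
  have orth: "f p \<bullet> f q = 0" if "p \<noteq> q" for p q
  proof (cases "fst p = fst q")
    case False then show ?thesis by (simp add: finner vv)
  next
    case True
    then have "snd p \<noteq> snd q" using that by (auto simp: prod_eq_iff)
    then have "cnj (c (snd p)) * c (snd q) = \<i> \<or> cnj (c (snd p)) * c (snd q) = - \<i>"
      by (cases "snd p"; cases "snd q") (auto simp: c_def)
    then obtain z where z: "cnj (c (snd p)) * c (snd q) = z" and zz: "z = \<i> \<or> z = - \<i>" by blast
    have "f p \<bullet> f q = Re (z * cinner (v (fst q)) (v (fst q)))"
      by (simp only: finner True z)
    then show ?thesis using zz cinner_self_Im[of "v (fst q)"] by auto
  qed
  have fpos: "0 < f p \<bullet> f p" for p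
  proof -
    have "f p \<bullet> f p = Re (cinner (v (fst p)) (v (fst p)))"
      by (simp add: finner mult.commute[of "cnj _"] cc)
    then show ?thesis using cinner_self_pos[OF vnz] by simp
  qed
  have inj: "inj f"
  proof
    fix p q assume "f p = f q"
    then show "p = q" using orth[of p q] fpos[of p] by (metis less_irrefl)
  qed
  have "pairwise orthogonal (range f)"
  proof (unfold pairwise_def orthogonal_def, intro ballI impI)
    fix x y assume xy: "x \<in> range f" "y \<in> range f" "x \<noteq> y"
    then obtain p q where pq: "x = f p" "y = f q" by auto
    with xy have "p \<noteq> q" by auto
    then show "x \<bullet> y = 0" using orth pq by simp
  qed
  moreover have "0 \<notin> range f" using fpos by (metis imageE inner_zero_left less_irrefl)
  ultimately have "independent (range f)" by (rule pairwise_orthogonal_independent)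
  then have "card (range f) \<le> DIM(complex^'n)" using independent_bound by blast
  moreover have "card (range f) = CARD('n option \<times> bool)" using inj by (simp add: card_image)
  ultimately show False by simp
qed

lemma cinner_sum_right: "cinner z (\<lambda>k. \<Sum>i\<in>I. f i k) = (\<Sum>i\<in>I. cinner z (f i))"
  by (simp add: cinner_def sum_distrib_left) (rule sum.swap)

lemma ortho_expand:
  fixes \<xi> :: "'n::finite \<Rightarrow> 'n \<Rightarrow> complex"
  assumes on: "orthonormal_basis \<xi>"
  shows "x = (\<lambda>k. \<Sum>i\<in>UNIV. cinner (\<xi> i) x * \<xi> i k)"
proof -
  have on': "\<And>i j. cinner (\<xi> i) (\<xi> j) = (if i = j then 1 else 0)" using on by (simp add: orthonormal_basis_def)
  define d where "d = (\<lambda>k. x k + (-1) * (\<Sum>i\<in>UNIV. cinner (\<xi> i) x * \<xi> i k))"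
  have "cinner (\<xi> j) d = 0" for j
  proof -
    have "cinner (\<xi> j) d = cinner (\<xi> j) x - (\<Sum>i\<in>UNIV. cinner (\<xi> i) x * cinner (\<xi> j) (\<xi> i))"
      unfolding d_def cinner_add_right cinner_scale_right cinner_sum_right by simp
    also have "\<dots> = 0" using on' by (simp add: if0_simps)
    finally show ?thesis .
  qed
  then have "d = (\<lambda>_. 0)" using ortho_complete[OF on] by blast
  then show ?thesis unfolding d_def by (auto simp: fun_eq_iff)
qed

lemma ortho_resol:
  fixes \<xi> :: "'n::finite \<Rightarrow> 'n \<Rightarrow> complex"
  assumes on: "orthonormal_basis \<xi>"
  shows "(\<Sum>i\<in>UNIV. \<xi> i k * cnj (\<xi> i l)) = (if k = l then 1 else 0)"
proof -
  have "(\<lambda>x. if x = l then 1 else 0) k = (\<Sum>i\<in>UNIV. cinner (\<xi> i) (\<lambda>x. if x = l then 1 else 0) * \<xi> i k)"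
    using fun_cong[OF ortho_expand[OF on, of "\<lambda>x. if x = l then 1 else 0"], of k] by simp
  also have "\<dots> = (\<Sum>i\<in>UNIV. \<xi> i k * cnj (\<xi> i l))"
    by (simp add: cinner_def if0_simps mult.commute)
  finally show ?thesis by (auto split: if_splits)
qed

lemma tov_nth_fun[simp]: "(\<lambda>l. tov x $ l) = x"
  by auto

lemma tov_vec[simp]: "tov (\<lambda>l. y $ l) = y"
  by (simp add: tov_def)

lemma norm_tov: "(norm (tov x))^2 = Re (cinner x x)"
  by (simp add: power2_norm_eq_inner tov_inner)

lemma cinner_self_eq: "cinner x x = of_real (Re (cinner x x))"
  by (simp add: complex_eq_iff cinner_self_Im)

lemma exist_perp:
  fixes vs :: "nat \<Rightarrow> 'n::finite \<Rightarrow> complex"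
  assumes k: "k < CARD('n)"
  shows "\<exists>x. x \<noteq> (\<lambda>_. 0) \<and> (\<forall>i<k. cinner (vs i) x = 0)"
proof -
  define S where "S = tov ` (vs ` {..<k}) \<union> tov ` ((\<lambda>i l. \<i> * vs i l) ` {..<k})"
  have fin: "finite S" by (simp add: S_def)
  have "card S \<le> card (tov ` (vs ` {..<k})) + card (tov ` ((\<lambda>i l. \<i> * vs i l) ` {..<k}))"
    unfolding S_def by (rule card_Un_le)
  also have "\<dots> \<le> k + k"
    by (intro add_mono order.trans[OF card_image_le] card_image_le[THEN order.trans]) auto
  finally have "card S \<le> 2 * k" by simp
  then have dS: "dim S < DIM(complex^'n)" using dim_le_card'[OF fin] k by simp
  obtain y where y0: "y \<noteq> 0" and yo: "\<And>z. z \<in> span S \<Longrightarrow> orthogonal y z"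
    using orthogonal_to_subspace_exists[OF dS] by blast
  define x where "x = (\<lambda>l. y $ l)"
  have "x \<noteq> (\<lambda>_. 0)" using y0 by (auto simp: x_def vec_eq_iff)
  moreover have "cinner (vs i) x = 0" if "i < k" for i
  proof -
    have "tov (vs i) \<in> span S" "tov (\<lambda>l. \<i> * vs i l) \<in> span S"
      using that by (auto simp: S_def intro!: span_base)
    then have "y \<bullet> tov (vs i) = 0" "y \<bullet> tov (\<lambda>l. \<i> * vs i l) = 0"
      using yo by (auto simp: orthogonal_def)
    then have "tov (vs i) \<bullet> tov x = 0" "tov (\<lambda>l. \<i> * vs i l) \<bullet> tov x = 0"
      by (simp_all add: x_def inner_commute)
    then have "Re (cinner (vs i) x) = 0" "Re (cinner (\<lambda>l. \<i> * vs i l) x) = 0"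
      by (simp_all add: tov_inner)
    then show ?thesis by (simp add: cinner_scale_left complex_eq_iff)
  qed
  ultimately show ?thesis by blast
qed

lemma app_cinner_herm:
  assumes h: "herm A"
  shows "cinner x (app A y) = cinner (app A x) y"
proof -
  have "cinner x (app A y) = bil A x y" by (simp add: bil_cinner)
  also have "\<dots> = cnj (bil A y x)" using bil_herm[OF h, of y x] by simp
  also have "\<dots> = cnj (cinner y (app A x))" by (simp add: bil_cinner)
  also have "\<dots> = cinner (app A x) y" by (simp add: cinner_cnj)
  finally show ?thesis .
qed

lemma bil_self_real: "herm A \<Longrightarrow> Im (bil A x x) = 0"
  using bil_herm[of A x x] by (metis cnj.simps(2) neg_equal_zero)

lemma cinner_eig: "app A v = (\<lambda>l. c * v l) \<Longrightarrow> cinner x (app A v) = c * cinner x v"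
  by (simp add: cinner_scale_right)

lemma eig_step:
  fixes A :: "'n::finite cop" and vs :: "nat \<Rightarrow> 'n \<Rightarrow> complex"
  assumes h: "herm A" and k: "k < CARD('n)"
    and ev: "\<forall>i<k. app A (vs i) = (\<lambda>l. bil A (vs i) (vs i) * vs i l)"
  shows "\<exists>w. cinner w w = 1 \<and> (\<forall>i<k. cinner (vs i) w = 0) \<and> app A w = (\<lambda>l. bil A w w * w l)"
proof -
  define W where "W x \<longleftrightarrow> (\<forall>i<k. cinner (vs i) x = 0)" for x
  have Wadd: "W (\<lambda>l. x l + y l)" if "W x" "W y" for x y
    using that by (simp add: W_def cinner_add_right)
  have Wscale: "W (\<lambda>l. c * x l)" if "W x" for x c
    using that by (simp add: W_def cinner_scale_right)
  have Winv: "W (app A x)" if "W x" for x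
  proof -
    have "cinner (vs i) (app A x) = 0" if "i < k" for i
    proof -
      have "cinner (vs i) (app A x) = cinner (app A (vs i)) x" by (rule app_cinner_herm[OF h])
      also have "\<dots> = cnj (bil A (vs i) (vs i)) * cinner (vs i) x"
        using ev that by (simp add: cinner_scale_left)
      also have "\<dots> = 0" using \<open>W x\<close> that by (simp add: W_def)
      finally show ?thesis .
    qed
    then show ?thesis by (simp add: W_def)
  qed
  define K where "K = {y :: complex^'n. norm y = 1 \<and> W (\<lambda>l. y $ l)}"
  define f where "f y = Re (bil A (\<lambda>l. y $ l) (\<lambda>l. y $ l))" for y :: "complex^'n"
  have cont_ci: "continuous_on UNIV (\<lambda>y :: complex^'n. cinner v (\<lambda>l. y $ l))" for v
    unfolding cinner_def by (intro continuous_intros)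
  have "closed K"
  proof -
    have "closed {y :: complex^'n. norm y = 1}"
      by (rule closed_Collect_eq) (intro continuous_intros)+
    moreover have "closed {y :: complex^'n. W (\<lambda>l. y $ l)}"
      unfolding W_def
      by (intro closed_Collect_all closed_Collect_imp open_Collect_const closed_Collect_eq cont_ci continuous_intros)
    ultimately show ?thesis unfolding K_def by (rule closed_Collect_conj)
  qed
  moreover have "bounded K" unfolding K_def bounded_iff by auto
  ultimately have cK: "compact K" by (simp add: compact_eq_bounded_closed)
  obtain x0 where x00: "x0 \<noteq> (\<lambda>_. 0)" and Wx0: "W x0" using exist_perp[OF k, of vs] unfolding W_def by blast
  have normalize: "tov (\<lambda>l. complex_of_real (1 / sqrt (Re (cinner x x))) * x l) \<in> K
      \<and> f (tov (\<lambda>l. complex_of_real (1 / sqrt (Re (cinner x x))) * x l)) = Re (bil A x x) / Re (cinner x x)"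
    if "x \<noteq> (\<lambda>_. 0)" "W x" for x
  proof -
    define N where "N = Re (cinner x x)"
    have N0: "N > 0" using cinner_self_pos[OF that(1)] by (simp add: N_def)
    define c where "c = complex_of_real (1 / sqrt N)"
    have sq: "(1 / sqrt N) * (1 / sqrt N) = 1 / N" using N0
      by (metis less_eq_real_def power2_eq_square power_one_over real_sqrt_pow2)
    have cc: "cnj c * c = of_real (1 / N)" unfolding c_def
      by (simp only: complex_cnj_complex_of_real of_real_mult[symmetric] sq)
    have "Re (cinner (\<lambda>l. c * x l) (\<lambda>l. c * x l)) = 1"
      using N0 by (simp add: cinner_scale_left cinner_scale_right mult.assoc[symmetric] cc N_def)
    then have "norm (tov (\<lambda>l. c * x l)) = 1"
      by (metis norm_tov norm_ge_zero power2_eq_1_iff one_power2 abs_of_nonneg real_sqrt_abs real_sqrt_one)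
    moreover have "W (\<lambda>l. c * x l)" using Wscale that(2) by blast
    moreover have "f (tov (\<lambda>l. c * x l)) = Re (bil A x x) / N"
    proof -
      have "bil A (\<lambda>l. c * x l) (\<lambda>l. c * x l) = of_real (1 / N) * bil A x x"
        by (simp add: bil_scale_left bil_scale_right mult.assoc[symmetric] cc)
      then show ?thesis by (simp add: f_def)
    qed
    ultimately show ?thesis by (simp add: K_def c_def N_def)
  qed
  have "K \<noteq> {}" using normalize[OF x00 Wx0] by blast
  moreover have "continuous_on K f"
    unfolding f_def bil_def by (intro continuous_intros)
  ultimately obtain w0 where w0K: "w0 \<in> K" and w0max: "\<And>y. y \<in> K \<Longrightarrow> f y \<le> f w0"
    using continuous_attains_sup[OF cK] by blast
  define w where "w = (\<lambda>l. w0 $ l)"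
  have Ww: "W w" using w0K by (simp add: K_def w_def)
  have ww: "cinner w w = 1"
  proof -
    have "(norm (tov w))^2 = 1" using w0K by (simp add: K_def w_def)
    then have "Re (cinner w w) = 1" by (simp add: norm_tov)
    then show ?thesis by (subst cinner_self_eq) simp
  qed
  define \<mu> where "\<mu> = bil A w w"
  have \<mu>r: "Im \<mu> = 0" using bil_self_real[OF h] by (simp add: \<mu>_def)
  have fw0: "f w0 = Re \<mu>" by (simp add: f_def \<mu>_def w_def)
  have maxp: "Re (bil A x x) \<le> Re \<mu> * Re (cinner x x)" if "W x" for x
  proof (cases "x = (\<lambda>_. 0)")
    case True then show ?thesis by (simp add: bil_def cinner_def)
  next
    case False
    have N0: "Re (cinner x x) > 0" using cinner_self_pos[OF False] .
    have "Re (bil A x x) / Re (cinner x x) \<le> Re \<mu>"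
      using normalize[OF False that] w0max fw0 by metis
    then show ?thesis using N0 by (simp add: divide_le_eq)
  qed
  define r where "r = (\<lambda>l. app A w l + (- \<mu>) * w l)"
  have Wr: "W r" unfolding r_def by (intro Wadd Wscale Winv Ww)
  have wAw: "cinner w (app A w) = \<mu>" by (simp add: \<mu>_def bil_cinner)
  have wr: "cinner w r = 0" unfolding r_def by (simp only: cinner_add_right cinner_scale_right wAw ww) simp
  have rw: "cinner r w = 0" using wr cinner_cnj[of w r] by simp
  show ?thesis
  proof (cases "r = (\<lambda>_. 0)")
    case True
    then have "app A w = (\<lambda>l. \<mu> * w l)" by (simp add: r_def fun_eq_iff)
    then show ?thesis using ww Ww unfolding W_def \<mu>_def by blast
  next
    case False
    define s where "s = Re (cinner r r)"
    have s0: "s > 0" using cinner_self_pos[OF False] by (simp add: s_def)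
    have rr: "cinner r r = of_real s" by (simp add: s_def cinner_self_eq[symmetric])
    have Arw: "bil A r w = of_real s"
    proof -
      have "bil A r w = cinner r (app A w)" by (simp add: bil_cinner)
      also have "app A w = (\<lambda>l. r l + \<mu> * w l)" by (simp add: r_def)
      finally show ?thesis by (simp add: cinner_add_right cinner_scale_right rw rr)
    qed
    have Awr: "bil A w r = of_real s" using bil_herm[OF h, of w r] Arw by simp
    define q where "q = Re (bil A r r)"
    define m where "m = Re \<mu>"
    have ineq: "2 * t * s + t^2 * q \<le> m * t^2 * s" for t :: real
    proof -
      define y where "y = (\<lambda>l. w l + of_real t * r l)"
      have Wy: "W y" unfolding y_def by (intro Wadd Wscale Ww Wr)
      have "cinner y y = cinner w w + of_real t * cinner w r + of_real t * cinner r w + of_real t * of_real t * cinner r r"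
        by (simp add: y_def cinner_add_left cinner_add_right cinner_scale_left cinner_scale_right algebra_simps)
      then have cy: "Re (cinner y y) = 1 + t^2 * s" by (simp add: ww wr rw rr power2_eq_square)
      have "bil A y y = bil A w w + of_real t * bil A w r + of_real t * bil A r w + of_real t * of_real t * bil A r r"
        by (simp add: y_def bil_add_left bil_add_right bil_scale_left bil_scale_right algebra_simps)
      then have byy: "Re (bil A y y) = m + 2 * t * s + t^2 * q"
        by (simp add: Awr Arw \<mu>_def[symmetric] m_def q_def power2_eq_square)
      have "m + 2 * t * s + t^2 * q \<le> m * (1 + t^2 * s)"
        using maxp[OF Wy] by (simp add: cy byy m_def)
      then show ?thesis by (simp add: algebra_simps)
    qed
    define K' where "K' = \<bar>q - m * s\<bar> + 1"
    have K'0: "K' > 0" by (simp add: K'_def)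
    define t where "t = s / K'"
    have t0: "t > 0" using s0 K'0 by (simp add: t_def)
    have "t * \<bar>q - m * s\<bar> \<le> s"
    proof -
      have "t * \<bar>q - m * s\<bar> \<le> t * K'" using t0 by (simp add: K'_def)
      also have "\<dots> = s" using K'0 by (simp add: t_def)
      finally show ?thesis .
    qed
    moreover have "t * (- \<bar>q - m * s\<bar>) \<le> t * (q - m * s)"
      using t0 by (intro mult_left_mono) auto
    ultimately have a: "t * (q - m * s) \<ge> - s" by simp
    have e: "t * (2 * s + t * (q - m * s)) = 2 * t * s + t^2 * q - m * t^2 * s"
      by (simp add: power2_eq_square algebra_simps)
    have "t * (2 * s + t * (q - m * s)) \<le> 0" using ineq[of t] unfolding e by linarith
    then have "2 * s + t * (q - m * s) \<le> 0"
      using t0 by (metis mult_pos_pos not_le)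
    then have "s \<le> 0" using a by linarith
    then show ?thesis using s0 by linarith
  qed
qed

lemma spec_ind:
  fixes A :: "'n::finite cop"
  assumes h: "herm A"
  shows "k \<le> CARD('n) \<Longrightarrow> \<exists>vs. (\<forall>i<k. \<forall>j<k. cinner (vs i) (vs j) = (if i = j then 1 else 0))
     \<and> (\<forall>i<k. app A (vs i) = (\<lambda>l. bil A (vs i) (vs i) * vs i l))"
proof (induction k)
  case 0 then show ?case by simp
next
  case (Suc k)
  then obtain vs where on: "\<forall>i<k. \<forall>j<k. cinner (vs i) (vs j) = (if i = j then 1 else 0)"
    and ev: "\<forall>i<k. app A (vs i) = (\<lambda>l. bil A (vs i) (vs i) * vs i l)" by auto
  obtain w where w1: "cinner w w = 1" and wo: "\<forall>i<k. cinner (vs i) w = 0"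
    and we: "app A w = (\<lambda>l. bil A w w * w l)"
    using eig_step[OF h _ ev] Suc.prems by auto
  have wo': "\<forall>i<k. cinner w (vs i) = 0" using wo cinner_cnj by (metis complex_cnj_zero)
  define vs' where "vs' = vs(k := w)"
  have "\<forall>i<Suc k. \<forall>j<Suc k. cinner (vs' i) (vs' j) = (if i = j then 1 else 0)"
    using on wo wo' w1 by (auto simp: vs'_def less_Suc_eq)
  moreover have "\<forall>i<Suc k. app A (vs' i) = (\<lambda>l. bil A (vs' i) (vs' i) * vs' i l)"
    using ev we by (auto simp: vs'_def less_Suc_eq)
  ultimately show ?case by blast
qed

theorem spectral:
  fixes A :: "'n::finite cop"
  assumes h: "herm A"
  shows "\<exists>\<xi>. orthonormal_basis \<xi> \<and> (\<forall>i. app A (\<xi> i) = (\<lambda>l. bil A (\<xi> i) (\<xi> i) * \<xi> i l))"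
proof -
  obtain vs where on: "\<forall>i<CARD('n). \<forall>j<CARD('n). cinner (vs i) (vs j) = (if i = j then 1 else 0)"
    and ev: "\<forall>i<CARD('n). app A (vs i) = (\<lambda>l. bil A (vs i) (vs i) * vs i l)"
    using spec_ind[OF h, of "CARD('n)"] by auto
  obtain g :: "'n \<Rightarrow> nat" where g: "bij_betw g UNIV {0..<CARD('n)}"
    using ex_bij_betw_finite_nat[of "UNIV :: 'n set"] by auto
  have gl: "g i < CARD('n)" for i using g by (auto simp: bij_betw_def)
  have gi: "g i = g j \<longleftrightarrow> i = j" for i j using g by (auto simp: bij_betw_def inj_on_def)
  show ?thesis
    by (rule exI[of _ "\<lambda>i. vs (g i)"]) (use on ev gl gi in \<open>auto simp: orthonormal_basis_def\<close>)
qed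

lemma sum_UNIV_prod:
  "(\<Sum>p\<in>(UNIV::('a::finite \<times> 'b::finite) set). f p) = (\<Sum>a\<in>UNIV. \<Sum>k\<in>UNIV. f (a, k))"
proof -
  have "(\<Sum>a\<in>UNIV. \<Sum>k\<in>UNIV. f (a, k)) = (\<Sum>(a,k)\<in>UNIV \<times> UNIV. f (a, k))"
    by (rule sum.cartesian_product)
  then show ?thesis by simp
qed

lemma steered_formula:
  fixes \<rho> :: "('a::finite \<times> 'b::finite) cop"
  shows "steered_unnorm \<rho> M k l = (\<Sum>a\<in>UNIV. \<Sum>a'\<in>UNIV. M a a' * \<rho> (a', k) (a, l))"
  unfolding steered_unnorm_def ptrace_A_def op_mult_def sum_UNIV_prod
  by (simp add: tensor_def op_id_def if0_simps sum.delta)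

lemma trace_formula:
  fixes \<rho> :: "('a::finite \<times> 'b::finite) cop"
  shows "op_trace (op_mult (tensor M op_id) \<rho>) = op_trace (steered_unnorm \<rho> M)"
  unfolding op_trace_def steered_unnorm_def ptrace_A_def sum_UNIV_prod
  by (rule sum.swap)

definition tv :: "('a \<Rightarrow> complex) \<Rightarrow> ('b \<Rightarrow> complex) \<Rightarrow> ('a \<times> 'b \<Rightarrow> complex)" where
  "tv v x = (\<lambda>p. v (fst p) * x (snd p))"

definition Gm :: "('a::finite \<times> 'b::finite) cop \<Rightarrow> ('b \<Rightarrow> complex) \<Rightarrow> ('b \<Rightarrow> complex) \<Rightarrow> 'a \<Rightarrow> 'a \<Rightarrow> complex" where
  "Gm \<rho> x y a' a = (\<Sum>k\<in>UNIV. \<Sum>l\<in>UNIV. cnj (x k) * \<rho> (a', k) (a, l) * y l)"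

definition Bf :: "('a::finite \<times> 'b::finite) cop \<Rightarrow> ('b \<Rightarrow> complex) \<Rightarrow> ('b \<Rightarrow> complex) \<Rightarrow> ('a \<Rightarrow> complex) \<Rightarrow> ('a \<Rightarrow> complex) \<Rightarrow> complex" where
  "Bf \<rho> x y v w = (\<Sum>a'\<in>UNIV. \<Sum>a\<in>UNIV. cnj (v a') * Gm \<rho> x y a' a * w a)"

lemma Bf_bil: "Bf \<rho> x y v w = bil \<rho> (tv v x) (tv w y)"
proof -
  have "bil \<rho> (tv v x) (tv w y) = (\<Sum>a'\<in>UNIV. \<Sum>k\<in>UNIV. \<Sum>a\<in>UNIV. \<Sum>l\<in>UNIV.
      cnj (v a') * (cnj (x k) * \<rho> (a', k) (a, l) * y l) * w a)"
    unfolding bil_def sum_UNIV_prod tv_def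
    by (intro sum.cong refl) (simp add: algebra_simps)
  also have "\<dots> = (\<Sum>a'\<in>UNIV. \<Sum>a\<in>UNIV. \<Sum>k\<in>UNIV. \<Sum>l\<in>UNIV.
      cnj (v a') * (cnj (x k) * \<rho> (a', k) (a, l) * y l) * w a)"
    by (intro sum.cong refl) (rule sum.swap)
  also have "\<dots> = Bf \<rho> x y v w"
    unfolding Bf_def Gm_def by (simp add: sum_distrib_left sum_distrib_right)
  finally show ?thesis by simp
qed

lemma mat_elem_formula:
  fixes \<rho> :: "('a::finite \<times> 'b::finite) cop"
  shows "mat_elem \<xi> (steered_unnorm \<rho> M) i j = (\<Sum>a\<in>UNIV. \<Sum>a'\<in>UNIV. M a a' * Gm \<rho> (\<xi> i) (\<xi> j) a' a)"
proof -
  have "mat_elem \<xi> (steered_unnorm \<rho> M) i j =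
     (\<Sum>k\<in>UNIV. \<Sum>l\<in>UNIV. \<Sum>a\<in>UNIV. \<Sum>a'\<in>UNIV. M a a' * (cnj (\<xi> i k) * \<rho> (a', k) (a, l) * \<xi> j l))"
    unfolding mat_elem_def steered_formula
    by (simp add: sum_distrib_left sum_distrib_right algebra_simps)
  also have "\<dots> = (\<Sum>k\<in>UNIV. \<Sum>a\<in>UNIV. \<Sum>l\<in>UNIV. \<Sum>a'\<in>UNIV. M a a' * (cnj (\<xi> i k) * \<rho> (a', k) (a, l) * \<xi> j l))"
    by (intro sum.cong refl) (rule sum.swap)
  also have "\<dots> = (\<Sum>a\<in>UNIV. \<Sum>k\<in>UNIV. \<Sum>l\<in>UNIV. \<Sum>a'\<in>UNIV. M a a' * (cnj (\<xi> i k) * \<rho> (a', k) (a, l) * \<xi> j l))"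
    by (rule sum.swap)
  also have "\<dots> = (\<Sum>a\<in>UNIV. \<Sum>k\<in>UNIV. \<Sum>a'\<in>UNIV. \<Sum>l\<in>UNIV. M a a' * (cnj (\<xi> i k) * \<rho> (a', k) (a, l) * \<xi> j l))"
    by (intro sum.cong refl) (rule sum.swap)
  also have "\<dots> = (\<Sum>a\<in>UNIV. \<Sum>a'\<in>UNIV. \<Sum>k\<in>UNIV. \<Sum>l\<in>UNIV. M a a' * (cnj (\<xi> i k) * \<rho> (a', k) (a, l) * \<xi> j l))"
    by (intro sum.cong refl) (rule sum.swap)
  also have "\<dots> = (\<Sum>a\<in>UNIV. \<Sum>a'\<in>UNIV. M a a' * Gm \<rho> (\<xi> i) (\<xi> j) a' a)"
    unfolding Gm_def by (simp add: sum_distrib_left)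
  finally show ?thesis .
qed

lemma psd_spectral:
  fixes M :: "'n::finite cop"
  assumes "psd M"
  shows "\<exists>u \<mu>. orthonormal_basis u \<and> (\<forall>m. 0 \<le> \<mu> m) \<and>
     (\<forall>a a'. M a a' = (\<Sum>m\<in>UNIV. complex_of_real (\<mu> m) * u m a * cnj (u m a')))"
proof -
  have h: "herm M" using psd_herm assms by blast
  obtain u where on: "orthonormal_basis u" and ev: "\<And>m. app M (u m) = (\<lambda>l. bil M (u m) (u m) * u m l)"
    using spectral[OF h] by blast
  define \<mu> where "\<mu> m = Re (bil M (u m) (u m))" for m
  have \<mu>0: "0 \<le> \<mu> m" for m using bil_psd_nonneg[OF assms] by (simp add: \<mu>_def)
  have \<mu>e: "bil M (u m) (u m) = of_real (\<mu> m)" for m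
    using bil_psd_nonneg[OF assms, of "u m"] by (simp add: \<mu>_def complex_eq_iff)
  have "M a a' = (\<Sum>m\<in>UNIV. complex_of_real (\<mu> m) * u m a * cnj (u m a'))" for a a'
  proof -
    have "(\<Sum>m\<in>UNIV. complex_of_real (\<mu> m) * u m a * cnj (u m a'))
        = (\<Sum>m\<in>UNIV. app M (u m) a * cnj (u m a'))"
      by (simp add: ev \<mu>e)
    also have "\<dots> = (\<Sum>m\<in>UNIV. \<Sum>l\<in>UNIV. M a l * (u m l * cnj (u m a')))"
      by (simp add: app_def sum_distrib_right mult.assoc)
    also have "\<dots> = (\<Sum>l\<in>UNIV. M a l * (\<Sum>m\<in>UNIV. u m l * cnj (u m a')))"
      by (subst sum.swap) (simp add: sum_distrib_left)
    also have "\<dots> = M a a'"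
      by (simp add: ortho_resol[OF on] if0_simps)
    finally show ?thesis by simp
  qed
  then show ?thesis using on \<mu>0 by blast
qed

lemma mat_elem_spec:
  fixes \<rho> :: "('a::finite \<times> 'b::finite) cop"
  assumes M: "\<forall>a a'. M a a' = (\<Sum>m\<in>UNIV. complex_of_real (\<mu> m) * u m a * cnj (u m a'))"
  shows "mat_elem \<xi> (steered_unnorm \<rho> M) i j = (\<Sum>m\<in>UNIV. of_real (\<mu> m) * Bf \<rho> (\<xi> i) (\<xi> j) (u m) (u m))"
proof -
  have "mat_elem \<xi> (steered_unnorm \<rho> M) i j
      = (\<Sum>a\<in>UNIV. \<Sum>a'\<in>UNIV. \<Sum>m\<in>UNIV. of_real (\<mu> m) * (u m a * cnj (u m a') * Gm \<rho> (\<xi> i) (\<xi> j) a' a))"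
  proof -
    have M': "M = (\<lambda>a a'. \<Sum>m\<in>UNIV. complex_of_real (\<mu> m) * u m a * cnj (u m a'))"
      using M by (auto simp: fun_eq_iff)
    show ?thesis unfolding mat_elem_formula M' by (simp add: sum_distrib_left sum_distrib_right mult.commute mult.left_commute)
  qed
  also have "\<dots> = (\<Sum>a\<in>UNIV. \<Sum>m\<in>UNIV. \<Sum>a'\<in>UNIV. of_real (\<mu> m) * (u m a * cnj (u m a') * Gm \<rho> (\<xi> i) (\<xi> j) a' a))"
    by (rule sum.cong[OF refl], rule sum.swap)
  also have "\<dots> = (\<Sum>m\<in>UNIV. \<Sum>a\<in>UNIV. \<Sum>a'\<in>UNIV. of_real (\<mu> m) * (u m a * cnj (u m a') * Gm \<rho> (\<xi> i) (\<xi> j) a' a))"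
    by (rule sum.swap)
  also have "\<dots> = (\<Sum>m\<in>UNIV. \<Sum>a'\<in>UNIV. \<Sum>a\<in>UNIV. of_real (\<mu> m) * (u m a * cnj (u m a') * Gm \<rho> (\<xi> i) (\<xi> j) a' a))"
    by (rule sum.cong[OF refl], rule sum.swap)
  also have "\<dots> = (\<Sum>m\<in>UNIV. of_real (\<mu> m) * Bf \<rho> (\<xi> i) (\<xi> j) (u m) (u m))"
    by (simp add: Bf_def sum_distrib_left ac_simps)
  finally show ?thesis .
qed

lemma trace_mat_elem:
  fixes S :: "'b::finite cop"
  assumes on: "orthonormal_basis \<xi>"
  shows "op_trace S = (\<Sum>i\<in>UNIV. mat_elem \<xi> S i i)"
proof -
  have "(\<Sum>i\<in>UNIV. mat_elem \<xi> S i i) = (\<Sum>i\<in>UNIV. \<Sum>k\<in>UNIV. \<Sum>l\<in>UNIV. S k l * (\<xi> i l * cnj (\<xi> i k)))"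
    unfolding mat_elem_def by (simp add: mult.commute mult.left_commute)
  also have "\<dots> = (\<Sum>k\<in>UNIV. \<Sum>i\<in>UNIV. \<Sum>l\<in>UNIV. S k l * (\<xi> i l * cnj (\<xi> i k)))"
    by (rule sum.swap)
  also have "\<dots> = (\<Sum>k\<in>UNIV. \<Sum>l\<in>UNIV. \<Sum>i\<in>UNIV. S k l * (\<xi> i l * cnj (\<xi> i k)))"
    by (rule sum.cong[OF refl], rule sum.swap)
  also have "\<dots> = (\<Sum>k\<in>UNIV. \<Sum>l\<in>UNIV. S k l * (\<Sum>i\<in>UNIV. \<xi> i l * cnj (\<xi> i k)))"
    by (simp add: sum_distrib_left)
  also have "\<dots> = op_trace S"
    by (simp add: ortho_resol[OF on] if0_simps op_trace_def)
  finally show ?thesis by simp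
qed

lemma prob_trace: "prob_M \<rho> M = Re (op_trace (steered_unnorm \<rho> M))"
  by (simp add: prob_M_def trace_formula)

lemma sum_pair_avg:
  fixes x :: "'b::finite \<Rightarrow> real"
  shows "(\<Sum>i\<in>UNIV. \<Sum>j\<in>UNIV. (x i + x j) / 2) = real CARD('b) * (\<Sum>i\<in>UNIV. x i)"
proof -
  have "(\<Sum>i\<in>UNIV. \<Sum>j\<in>UNIV. (x i + x j) / 2) = (\<Sum>i\<in>UNIV. \<Sum>j\<in>(UNIV::'b set). x i / 2) + (\<Sum>i\<in>(UNIV::'b set). \<Sum>j\<in>UNIV. x j / 2)"
    by (simp add: add_divide_distrib sum.distrib)
  also have "(\<Sum>i\<in>UNIV. \<Sum>j\<in>(UNIV::'b set). x i / 2) = real CARD('b) * (\<Sum>i\<in>UNIV. x i) / 2"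
    by (simp add: sum_distrib_left sum_divide_distrib)
  also have "(\<Sum>i\<in>(UNIV::'b set). \<Sum>j\<in>UNIV. x j / 2) = real CARD('b) * (\<Sum>i\<in>UNIV. x i) / 2"
    by (simp add: sum_divide_distrib[symmetric])
  finally show ?thesis by simp
qed

lemma coh_bound:
  fixes \<rho> :: "('a::finite \<times> 'b::finite) cop"
  assumes r: "psd \<rho>" and M: "psd M" and on: "orthonormal_basis \<xi>"
  shows "(\<Sum>i\<in>UNIV. \<Sum>j\<in>UNIV. cmod (mat_elem \<xi> (steered_unnorm \<rho> M) i j)) \<le> real CARD('b) * prob_M \<rho> M
     \<and> 0 \<le> prob_M \<rho> M"
proof -
  obtain u \<mu> where uon: "orthonormal_basis u" and \<mu>0: "\<forall>m. 0 \<le> \<mu> m"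
    and Mdec: "\<forall>a a'. M a a' = (\<Sum>m\<in>UNIV. complex_of_real (\<mu> m) * u m a * cnj (u m a'))"
    using psd_spectral[OF M] by blast
  define D where "D m i = Re (Bf \<rho> (\<xi> i) (\<xi> i) (u m) (u m))" for m i
  have D0: "0 \<le> D m i" for m i using bil_psd_nonneg[OF r] by (simp add: D_def Bf_bil)
  have DI: "Bf \<rho> (\<xi> i) (\<xi> i) (u m) (u m) = of_real (D m i)" for m i
    using bil_psd_nonneg[OF r, of "tv (u m) (\<xi> i)"] by (simp add: D_def Bf_bil complex_eq_iff)
  have me: "mat_elem \<xi> (steered_unnorm \<rho> M) i j = (\<Sum>m\<in>UNIV. of_real (\<mu> m) * Bf \<rho> (\<xi> i) (\<xi> j) (u m) (u m))" for i j
    by (rule mat_elem_spec[OF Mdec])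
  have bnd: "cmod (mat_elem \<xi> (steered_unnorm \<rho> M) i j) \<le> (\<Sum>m\<in>UNIV. \<mu> m * ((D m i + D m j) / 2))" for i j
  proof -
    have "cmod (mat_elem \<xi> (steered_unnorm \<rho> M) i j) \<le> (\<Sum>m\<in>UNIV. cmod (of_real (\<mu> m) * Bf \<rho> (\<xi> i) (\<xi> j) (u m) (u m)))"
      unfolding me by (rule norm_sum)
    also have "\<dots> \<le> (\<Sum>m\<in>UNIV. \<mu> m * ((D m i + D m j) / 2))"
    proof (rule sum_mono)
      fix m
      have "2 * cmod (Bf \<rho> (\<xi> i) (\<xi> j) (u m) (u m)) \<le> D m i + D m j"
        using psd_amgm[OF r, of "tv (u m) (\<xi> i)" "tv (u m) (\<xi> j)"] by (simp add: D_def Bf_bil)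
      then have "\<mu> m * (2 * cmod (Bf \<rho> (\<xi> i) (\<xi> j) (u m) (u m))) \<le> \<mu> m * (D m i + D m j)"
        using \<mu>0 by (intro mult_left_mono) auto
      then show "cmod (of_real (\<mu> m) * Bf \<rho> (\<xi> i) (\<xi> j) (u m) (u m)) \<le> \<mu> m * ((D m i + D m j) / 2)"
        using \<mu>0 by (simp add: norm_mult)
    qed
    finally show ?thesis .
  qed
  have pr: "prob_M \<rho> M = (\<Sum>m\<in>UNIV. \<mu> m * (\<Sum>i\<in>UNIV. D m i))"
  proof -
    have "prob_M \<rho> M = Re (\<Sum>i\<in>UNIV. mat_elem \<xi> (steered_unnorm \<rho> M) i i)"
      by (simp add: prob_trace trace_mat_elem[OF on])
    also have "\<dots> = (\<Sum>i\<in>UNIV. \<Sum>m\<in>UNIV. \<mu> m * D m i)"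
      by (simp add: me DI Re_sum)
    also have "\<dots> = (\<Sum>m\<in>UNIV. \<mu> m * (\<Sum>i\<in>UNIV. D m i))"
      by (subst sum.swap) (simp add: sum_distrib_left)
    finally show ?thesis .
  qed
  have "(\<Sum>i\<in>UNIV. \<Sum>j\<in>UNIV. cmod (mat_elem \<xi> (steered_unnorm \<rho> M) i j))
      \<le> (\<Sum>i\<in>UNIV. \<Sum>j\<in>UNIV. \<Sum>m\<in>UNIV. \<mu> m * ((D m i + D m j) / 2))"
    by (intro sum_mono bnd)
  also have "\<dots> = (\<Sum>i\<in>UNIV. \<Sum>m\<in>UNIV. \<Sum>j\<in>UNIV. \<mu> m * ((D m i + D m j) / 2))"
    by (rule sum.cong[OF refl], rule sum.swap)
  also have "\<dots> = (\<Sum>m\<in>UNIV. \<Sum>i\<in>UNIV. \<Sum>j\<in>UNIV. \<mu> m * ((D m i + D m j) / 2))"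
    by (rule sum.swap)
  also have "\<dots> = (\<Sum>m\<in>UNIV. \<mu> m * (\<Sum>i\<in>UNIV. \<Sum>j\<in>UNIV. (D m i + D m j) / 2))"
    by (simp only: sum_distrib_left)
  also have "\<dots> = (\<Sum>m\<in>UNIV. \<mu> m * (real CARD('b) * (\<Sum>i\<in>UNIV. D m i)))"
    by (simp only: sum_pair_avg)
  also have "\<dots> = real CARD('b) * prob_M \<rho> M"
    unfolding pr sum_distrib_left by (simp only: mult.left_commute)
  moreover have "0 \<le> prob_M \<rho> M" unfolding pr using \<mu>0 D0 by (intro sum_nonneg mult_nonneg_nonneg) auto
  ultimately show ?thesis by simp
qed

lemma steered_diff:
  fixes \<rho> :: "('a::finite \<times> 'b::finite) cop"
  shows "steered_unnorm \<rho> (\<lambda>a a'. X a a' - Y a a') k l = steered_unnorm \<rho> X k l - steered_unnorm \<rho> Y k l"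
  unfolding steered_formula by (simp add: left_diff_distrib sum_subtractf)

lemma prob_diff:
  fixes \<rho> :: "('a::finite \<times> 'b::finite) cop"
  shows "prob_M \<rho> (\<lambda>a a'. X a a' - Y a a') = prob_M \<rho> X - prob_M \<rho> Y"
  unfolding prob_trace op_trace_def steered_diff by (simp add: sum_subtractf)

lemma op_mult_id_left: "op_mult op_id A = A"
  by (simp add: op_mult_def op_id_def if0_simps sum.delta)

lemma tensor_id: "tensor (op_id :: 'a cop) (op_id :: 'b cop) = op_id"
  by (auto simp: tensor_def op_id_def fun_eq_iff)

lemma prob_id: "prob_M \<rho> op_id = Re (op_trace \<rho>)"
  by (simp add: prob_M_def tensor_id op_mult_id_left)

lemma psd_id: "psd (op_id :: 'n::finite cop)"
proof -
  have "quad_form (op_id :: 'n cop) v = cinner v v" for v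
    by (simp add: quad_form_def cinner_def op_id_def if0_simps sum.delta)
  then show ?thesis unfolding psd_def
    by (simp add: cinner_self_real sum_nonneg del: of_real_power)
qed

lemma psd_zero: "psd (\<lambda>i j. 0 :: complex)"
  by (simp add: psd_def quad_form_def)

lemma povm_id: "povm_elem (op_id :: 'n::finite cop)"
  by (simp add: povm_elem_def psd_id psd_zero)

lemma prob_le1:
  fixes \<rho> :: "('a::finite \<times> 'b::finite) cop"
  assumes "is_state \<rho>" "povm_elem M"
  shows "prob_M \<rho> M \<le> 1" "0 \<le> prob_M \<rho> M"
proof -
  have r: "psd \<rho>" using assms by (simp add: is_state_def)
  obtain \<xi> :: "'b \<Rightarrow> 'b \<Rightarrow> complex" where on: "orthonormal_basis \<xi>"
    using spectral[OF psd_herm[OF psd_id]] by blast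
  have "0 \<le> prob_M \<rho> (\<lambda>a a'. op_id a a' - M a a')"
    using coh_bound[OF r _ on] assms(2) by (simp add: povm_elem_def)
  then show "prob_M \<rho> M \<le> 1" using assms(1) by (simp add: prob_diff prob_id is_state_def)
  show "0 \<le> prob_M \<rho> M"
    using coh_bound[OF r _ on] assms(2) by (simp add: povm_elem_def)
qed

definition Nc :: "('a::finite \<times> 'b::finite) cop \<Rightarrow> ('b \<Rightarrow> 'b \<Rightarrow> complex) \<Rightarrow> 'a cop \<Rightarrow> real" where
  "Nc \<rho> \<xi> M = (\<Sum>i\<in>UNIV. \<Sum>j\<in>UNIV. if i \<noteq> j then cmod (mat_elem \<xi> (steered_unnorm \<rho> M) i j) else 0)"

definition gsup :: "('a::finite \<times> 'b::finite) cop \<Rightarrow> ('b \<Rightarrow> 'b \<Rightarrow> complex) \<Rightarrow> real" where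
  "gsup \<rho> \<xi> = (SUP M \<in> {M. povm_elem M \<and> prob_M \<rho> M > 0}. steered_coherence \<rho> \<xi> M)"

lemma max_steered_gsup: "max_steered_coherence \<rho> = Inf {gsup \<rho> \<xi> | \<xi>. is_eigenbasis (ptrace_A \<rho>) \<xi>}"
  by (simp add: max_steered_coherence_def gsup_def)

lemma Nc_le:
  fixes \<rho> :: "('a::finite \<times> 'b::finite) cop"
  assumes r: "psd \<rho>" and M: "psd M" and on: "orthonormal_basis \<xi>"
  shows "Nc \<rho> \<xi> M \<le> real CARD('b) * prob_M \<rho> M" "0 \<le> Nc \<rho> \<xi> M"
proof -
  have "Nc \<rho> \<xi> M \<le> (\<Sum>i\<in>UNIV. \<Sum>j\<in>UNIV. cmod (mat_elem \<xi> (steered_unnorm \<rho> M) i j))"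
    unfolding Nc_def by (intro sum_mono) auto
  then show "Nc \<rho> \<xi> M \<le> real CARD('b) * prob_M \<rho> M" using coh_bound[OF r M on] by linarith
  show "0 \<le> Nc \<rho> \<xi> M" unfolding Nc_def by (intro sum_nonneg) auto
qed

lemma coh_Nc: "steered_coherence \<rho> \<xi> M = Nc \<rho> \<xi> M / prob_M \<rho> M"
  by (simp add: steered_coherence_def Nc_def)

lemma gsup_props:
  fixes \<rho> :: "('a::finite \<times> 'b::finite) cop"
  assumes st: "is_state \<rho>" and on: "orthonormal_basis \<xi>"
  shows "0 \<le> gsup \<rho> \<xi>" "\<And>M. povm_elem M \<Longrightarrow> Nc \<rho> \<xi> M \<le> gsup \<rho> \<xi>"
proof -
  have r: "psd \<rho>" using st by (simp add: is_state_def)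
  define S where "S = {M :: 'a cop. povm_elem M \<and> prob_M \<rho> M > 0}"
  have idS: "op_id \<in> S" using st by (simp add: S_def povm_id prob_id is_state_def)
  have cb: "0 \<le> steered_coherence \<rho> \<xi> M \<and> steered_coherence \<rho> \<xi> M \<le> real CARD('b)" if "M \<in> S" for M
  proof -
    have p: "prob_M \<rho> M > 0" and Mp: "psd M" using that by (auto simp: S_def povm_elem_def)
    have "Nc \<rho> \<xi> M / prob_M \<rho> M \<le> real CARD('b)"
      using Nc_le(1)[OF r Mp on] p by (simp add: divide_le_eq)
    moreover have "0 \<le> Nc \<rho> \<xi> M / prob_M \<rho> M" using Nc_le(2)[OF r Mp on] p by simp
    ultimately show ?thesis by (simp add: coh_Nc)
  qed
  have bdd: "bdd_above (steered_coherence \<rho> \<xi> ` S)"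
    using cb by (intro bdd_aboveI2[where M="real CARD('b)"]) auto
  have up: "steered_coherence \<rho> \<xi> M \<le> gsup \<rho> \<xi>" if "M \<in> S" for M
    unfolding gsup_def S_def[symmetric] by (rule cSUP_upper[OF that bdd])
  show g0: "0 \<le> gsup \<rho> \<xi>" using up[OF idS] cb[OF idS] by linarith
  show "Nc \<rho> \<xi> M \<le> gsup \<rho> \<xi>" if M: "povm_elem M" for M
  proof (cases "prob_M \<rho> M > 0")
    case True
    then have MS: "M \<in> S" using M by (simp add: S_def)
    have p1: "prob_M \<rho> M \<le> 1" using prob_le1[OF st M] by simp
    have N0: "0 \<le> Nc \<rho> \<xi> M" using Nc_le(2)[OF r _ on] M by (simp add: povm_elem_def)
    have "Nc \<rho> \<xi> M \<le> Nc \<rho> \<xi> M / prob_M \<rho> M"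
      using True p1 N0 by (simp add: le_divide_eq mult_left_le)
    also have "\<dots> \<le> gsup \<rho> \<xi>" using up[OF MS] by (simp add: coh_Nc)
    finally show ?thesis .
  next
    case False
    then have "prob_M \<rho> M = 0" using prob_le1(2)[OF st M] by linarith
    moreover have "psd M" using M by (simp add: povm_elem_def)
    ultimately have "Nc \<rho> \<xi> M \<le> 0" using Nc_le(1)[OF r _ on, of M] by simp
    then show ?thesis using g0 by linarith
  qed
qed

lemma tov_add: "tov (\<lambda>l. x l + y l) = tov x + tov y"
  by (simp add: tov_def vec_eq_iff)

lemma norm_tov_scale: "norm (tov (\<lambda>l. z * x l)) = cmod z * norm (tov x)"
proof -
  have "(norm (tov (\<lambda>l. z * x l)))^2 = (cmod z * norm (tov x))^2"
    by (simp add: norm_tov cinner_scale_left cinner_scale_right mult.assoc[symmetric] cnj_mult_self power_mult_distrib)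
  then show ?thesis by (simp add: power2_eq_iff_nonneg)
qed

lemma cinner_CS: "(cmod (cinner v w))^2 \<le> Re (cinner v v) * Re (cinner w w)"
proof (cases "cinner v w = 0")
  case True then show ?thesis using cinner_self_real[of v] cinner_self_real[of w]
    by (simp add: sum_nonneg del: of_real_power)
next
  case False
  define c where "c = cinner v w"
  define z where "z = cnj c / of_real (cmod c)"
  have z1: "cmod z = 1" using False by (simp add: z_def c_def norm_divide)
  have "z * c = of_real (cmod c)"
  proof -
    have "z * c = (cnj c * c) / of_real (cmod c)" by (simp add: z_def)
    also have "\<dots> = of_real (cmod c)" using False
      by (simp add: cnj_mult_self c_def power2_eq_square)
    finally show ?thesis .
  qed
  then have "cmod c = Re (cinner v (\<lambda>l. z * w l))" by (simp add: cinner_scale_right c_def)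
  also have "\<dots> = tov v \<bullet> tov (\<lambda>l. z * w l)" by (simp add: tov_inner)
  also have "\<dots> \<le> norm (tov v) * norm (tov (\<lambda>l. z * w l))" by (rule norm_cauchy_schwarz)
  also have "\<dots> = norm (tov v) * norm (tov w)" by (simp add: norm_tov_scale z1)
  finally have "cmod c \<le> norm (tov v) * norm (tov w)" .
  then have "(cmod c)^2 \<le> (norm (tov v) * norm (tov w))^2"
    by (intro power_mono) auto
  then show ?thesis by (simp add: power_mult_distrib norm_tov c_def)
qed

definition vz :: "'n \<Rightarrow> 'n \<Rightarrow> complex \<Rightarrow> 'n \<Rightarrow> complex" where
  "vz a b z = (\<lambda>t. uvec a t + z * uvec b t)"

lemma norm_tov_uvec: "norm (tov (uvec a :: 'n::finite \<Rightarrow> complex)) = 1"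
proof -
  have "(norm (tov (uvec a :: 'n \<Rightarrow> complex)))^2 = 1"
    by (simp add: norm_tov cinner_def uvec_def if0_simps sum.delta)
  then show ?thesis using norm_ge_zero[of "tov (uvec a :: 'n \<Rightarrow> complex)"] by (auto simp: power2_eq_1_iff)
qed

lemma vz_norm:
  fixes a b :: "'n::finite"
  assumes "cmod z = 1"
  shows "Re (cinner (vz a b z) (vz a b z)) \<le> 4"
proof -
  have "norm (tov (vz a b z)) \<le> norm (tov (uvec a)) + norm (tov (\<lambda>t. z * uvec b t))"
    unfolding vz_def tov_add by (rule norm_triangle_ineq)
  also have "\<dots> = 2" using assms by (simp add: norm_tov_scale norm_tov_uvec)
  finally have "(norm (tov (vz a b z)))^2 \<le> 2^2" by (intro power_mono) auto
  then show ?thesis by (simp add: norm_tov)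
qed

definition Mv :: "('n \<Rightarrow> complex) \<Rightarrow> 'n cop" where
  "Mv v = (\<lambda>x y. (1/4) * v x * cnj (v y))"

lemma quad_Mv: "quad_form (Mv v) w = of_real ((cmod (cinner v w))^2 / 4)"
proof -
  have "quad_form (Mv v) w = (1/4) * (cinner w v * cinner v w)"
    unfolding quad_form_def Mv_def cinner_def sum_product
    by (simp add: sum_distrib_left algebra_simps)
  also have "cinner w v = cnj (cinner v w)" by (simp add: cinner_cnj)
  finally show ?thesis by (simp add: cnj_mult_self)
qed

lemma quad_diff: "quad_form (\<lambda>i j. A i j - B i j) v = quad_form A v - quad_form B v"
  by (simp add: quad_form_def algebra_simps sum_subtractf)

lemma quad_id: "quad_form op_id v = cinner v v"
  by (simp add: quad_form_def cinner_def op_id_def if0_simps sum.delta)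

lemma povm_Mv:
  fixes v :: "'n::finite \<Rightarrow> complex"
  assumes "Re (cinner v v) \<le> 4"
  shows "povm_elem (Mv v)"
  unfolding povm_elem_def psd_def
proof (intro conjI allI)
  fix w
  show "quad_form (Mv v) w \<in> \<real>" "0 \<le> Re (quad_form (Mv v) w)" by (simp_all add: quad_Mv)
  have cs: "(cmod (cinner v w))^2 \<le> Re (cinner v v) * Re (cinner w w)" by (rule cinner_CS)
  have ww: "0 \<le> Re (cinner w w)" using cinner_self_pos[of w] by (cases "w = (\<lambda>_. 0)") (auto simp: cinner_def)
  have "Re (cinner v v) * Re (cinner w w) \<le> 4 * Re (cinner w w)"
    using assms ww by (intro mult_right_mono) auto
  then have le: "(cmod (cinner v w))^2 / 4 \<le> Re (cinner w w)" using cs by simp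
  have eq: "quad_form (\<lambda>i j. op_id i j - Mv v i j) w = of_real (Re (cinner w w) - (cmod (cinner v w))^2 / 4)"
    by (simp add: quad_diff quad_id quad_Mv) (subst cinner_self_eq, simp)
  show "quad_form (\<lambda>i j. op_id i j - Mv v i j) w \<in> \<real>" "0 \<le> Re (quad_form (\<lambda>i j. op_id i j - Mv v i j) w)"
    using le by (simp_all add: eq)
qed

lemma mat_elem_Mv:
  fixes \<rho> :: "('a::finite \<times> 'b::finite) cop"
  shows "mat_elem \<xi> (steered_unnorm \<rho> (Mv v)) i j = (1/4) * Bf \<rho> (\<xi> i) (\<xi> j) v v"
proof -
  have "mat_elem \<xi> (steered_unnorm \<rho> (Mv v)) i j = (\<Sum>a\<in>UNIV. \<Sum>a'\<in>UNIV. (1/4) * (cnj (v a') * Gm \<rho> (\<xi> i) (\<xi> j) a' a * v a))"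
    unfolding mat_elem_formula Mv_def by (simp add: ac_simps)
  also have "\<dots> = (\<Sum>a'\<in>UNIV. \<Sum>a\<in>UNIV. (1/4) * (cnj (v a') * Gm \<rho> (\<xi> i) (\<xi> j) a' a * v a))"
    by (rule sum.swap)
  also have "\<dots> = (1/4) * Bf \<rho> (\<xi> i) (\<xi> j) v v"
    unfolding Bf_def by (simp only: sum_distrib_left)
  finally show ?thesis .
qed

lemma tv_lin: "tv (\<lambda>t. u t + z * w t) x = (\<lambda>p. tv u x p + z * tv w x p)"
  by (simp add: tv_def fun_eq_iff algebra_simps)

lemma Bf_expand:
  "Bf \<rho> x y (\<lambda>t. u t + z * w t) (\<lambda>t. u t + z * w t) =
    Bf \<rho> x y u u + z * Bf \<rho> x y u w + cnj z * Bf \<rho> x y w u + cnj z * z * Bf \<rho> x y w w"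
  unfolding Bf_bil tv_lin
  by (simp add: bil_add_left bil_add_right bil_scale_left bil_scale_right algebra_simps)

lemma polar:
  "4 * Bf \<rho> x y u w = Bf \<rho> x y (\<lambda>t. u t + 1 * w t) (\<lambda>t. u t + 1 * w t)
     - Bf \<rho> x y (\<lambda>t. u t + (-1) * w t) (\<lambda>t. u t + (-1) * w t)
     - \<i> * Bf \<rho> x y (\<lambda>t. u t + \<i> * w t) (\<lambda>t. u t + \<i> * w t)
     + \<i> * Bf \<rho> x y (\<lambda>t. u t + (-\<i>) * w t) (\<lambda>t. u t + (-\<i>) * w t)"
  unfolding Bf_expand by (simp add: algebra_simps)

lemma Bf_uvec: "Bf \<rho> x y (uvec a) (uvec b) = Gm \<rho> x y a b"
  by (simp add: Bf_def uvec_def if0_simps sum.delta)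

lemma Gm_bound:
  fixes \<rho> :: "('a::finite \<times> 'b::finite) cop"
  assumes st: "is_state \<rho>" and on: "orthonormal_basis \<xi>" and ij: "i \<noteq> j"
  shows "cmod (Gm \<rho> (\<xi> i) (\<xi> j) a b) \<le> 4 * gsup \<rho> \<xi>"
proof -
  define Q where "Q z = Bf \<rho> (\<xi> i) (\<xi> j) (vz a b z) (vz a b z)" for z
  have Qb: "cmod (Q z) \<le> 4 * gsup \<rho> \<xi>" if z: "cmod z = 1" for z
  proof -
    have P: "povm_elem (Mv (vz a b z))" by (rule povm_Mv[OF vz_norm[OF z]])
    have "cmod (mat_elem \<xi> (steered_unnorm \<rho> (Mv (vz a b z))) i j) \<le> Nc \<rho> \<xi> (Mv (vz a b z))"
    proof -
      let ?f = "\<lambda>i j. if i \<noteq> j then cmod (mat_elem \<xi> (steered_unnorm \<rho> (Mv (vz a b z))) i j) else 0"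
      have "?f i j \<le> (\<Sum>j'\<in>UNIV. ?f i j')" by (rule member_le_sum) auto
      also have "\<dots> \<le> (\<Sum>i'\<in>UNIV. \<Sum>j'\<in>UNIV. ?f i' j')"
        by (rule member_le_sum[where f="\<lambda>i'. \<Sum>j'\<in>UNIV. ?f i' j'"]) (auto intro: sum_nonneg)
      finally show ?thesis using ij by (simp add: Nc_def)
    qed
    also have "\<dots> \<le> gsup \<rho> \<xi>" by (rule gsup_props(2)[OF st on P])
    finally have "cmod ((1/4) * Q z) \<le> gsup \<rho> \<xi>" by (simp add: mat_elem_Mv Q_def)
    then show ?thesis by (simp add: norm_mult)
  qed
  have "4 * cmod (Gm \<rho> (\<xi> i) (\<xi> j) a b) = cmod (Q 1 - Q (-1) - \<i> * Q \<i> + \<i> * Q (-\<i>))"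
    unfolding Q_def vz_def polar[symmetric] Bf_uvec by (simp add: norm_mult)
  also have "\<dots> \<le> cmod (Q 1) + cmod (Q (-1)) + cmod (Q \<i>) + cmod (Q (-\<i>))"
  proof -
    have t1: "cmod (Q 1 - Q (-1) - \<i> * Q \<i> + \<i> * Q (-\<i>)) \<le> cmod (Q 1 - Q (-1) - \<i> * Q \<i>) + cmod (\<i> * Q (-\<i>))"
      by (rule norm_triangle_ineq)
    have t2: "cmod (Q 1 - Q (-1) - \<i> * Q \<i>) \<le> cmod (Q 1 - Q (-1)) + cmod (\<i> * Q \<i>)"
      by (rule norm_triangle_ineq4)
    have t3: "cmod (Q 1 - Q (-1)) \<le> cmod (Q 1) + cmod (Q (-1))"
      by (rule norm_triangle_ineq4)
    have "cmod (\<i> * Q \<i>) = cmod (Q \<i>)" "cmod (\<i> * Q (-\<i>)) = cmod (Q (-\<i>))" by (simp_all add: norm_mult)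
    then show ?thesis using t1 t2 t3 by linarith
  qed
  also have "\<dots> \<le> 4 * (4 * gsup \<rho> \<xi>)" using Qb[of 1] Qb[of "-1"] Qb[of \<i>] Qb[of "-\<i>"] by simp
  finally show ?thesis by simp
qed

lemma eigenbasis_iff:
  "is_eigenbasis S \<xi> \<longleftrightarrow> orthonormal_basis \<xi> \<and> (\<forall>i. app S (\<xi> i) = (\<lambda>l. bil S (\<xi> i) (\<xi> i) * \<xi> i l))"
proof
  assume e: "is_eigenbasis S \<xi>"
  then have on: "orthonormal_basis \<xi>" by (simp add: is_eigenbasis_def)
  have "app S (\<xi> i) = (\<lambda>l. bil S (\<xi> i) (\<xi> i) * \<xi> i l)" for i
  proof -
    obtain c where c: "\<And>k. (\<Sum>l\<in>UNIV. S k l * \<xi> i l) = c * \<xi> i k"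
      using e unfolding is_eigenbasis_def by blast
    have ac: "app S (\<xi> i) = (\<lambda>l. c * \<xi> i l)" by (simp add: app_def c fun_eq_iff)
    have "bil S (\<xi> i) (\<xi> i) = c"
      using on by (simp add: bil_cinner ac cinner_scale_right orthonormal_basis_def)
    then show ?thesis using ac by simp
  qed
  then show "orthonormal_basis \<xi> \<and> (\<forall>i. app S (\<xi> i) = (\<lambda>l. bil S (\<xi> i) (\<xi> i) * \<xi> i l))" using on by blast
next
  assume "orthonormal_basis \<xi> \<and> (\<forall>i. app S (\<xi> i) = (\<lambda>l. bil S (\<xi> i) (\<xi> i) * \<xi> i l))"
  then show "is_eigenbasis S \<xi>" unfolding is_eigenbasis_def
    by (metis app_def)
qed

lemma Gm_self: "Gm \<rho> y y a a = bil \<rho> (tv (uvec a) y) (tv (uvec a) y)"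
  using Bf_bil[of \<rho> y y "uvec a" "uvec a"] by (simp add: Bf_uvec)

lemma psd_ptrace:
  fixes \<rho> :: "('a::finite \<times> 'b::finite) cop"
  assumes r: "psd \<rho>"
  shows "psd (ptrace_A \<rho>)"
proof -
  have q: "quad_form (ptrace_A \<rho>) y = (\<Sum>a\<in>UNIV. Gm \<rho> y y a a)" for y
  proof -
    have "quad_form (ptrace_A \<rho>) y = (\<Sum>k\<in>UNIV. \<Sum>l\<in>UNIV. \<Sum>a\<in>UNIV. cnj (y k) * \<rho> (a, k) (a, l) * y l)"
      unfolding quad_form_def ptrace_A_def by (simp add: sum_distrib_left sum_distrib_right)
    also have "\<dots> = (\<Sum>k\<in>UNIV. \<Sum>a\<in>UNIV. \<Sum>l\<in>UNIV. cnj (y k) * \<rho> (a, k) (a, l) * y l)"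
      by (rule sum.cong[OF refl], rule sum.swap)
    also have "\<dots> = (\<Sum>a\<in>UNIV. \<Sum>k\<in>UNIV. \<Sum>l\<in>UNIV. cnj (y k) * \<rho> (a, k) (a, l) * y l)"
      by (rule sum.swap)
    finally show ?thesis by (simp add: Gm_def)
  qed
  have "Im (Gm \<rho> y y a a) = 0 \<and> 0 \<le> Re (Gm \<rho> y y a a)" for y a
    using bil_psd_nonneg[OF r] by (simp add: Gm_self)
  then show ?thesis unfolding psd_def q
    by (auto simp: complex_is_Real_iff Im_sum Re_sum intro: sum_nonneg)
qed

definition rowf :: "complex^'b^'b \<Rightarrow> 'b \<Rightarrow> 'b \<Rightarrow> complex" where
  "rowf X = (\<lambda>i k. X $ i $ k)"

definition tomat :: "('b::finite \<Rightarrow> 'b \<Rightarrow> complex) \<Rightarrow> complex^'b^'b" where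
  "tomat \<xi> = (\<chi> i. \<chi> k. \<xi> i k)"

lemma rowf_tomat[simp]: "rowf (tomat \<xi>) = \<xi>"
  by (simp add: rowf_def tomat_def)

definition hfun :: "('a::finite \<times> 'b::finite) cop \<Rightarrow> ('b \<Rightarrow> 'b \<Rightarrow> complex) \<Rightarrow> real" where
  "hfun \<rho> \<xi> = (\<Sum>i\<in>UNIV. \<Sum>j\<in>UNIV. \<Sum>a\<in>UNIV. \<Sum>b\<in>UNIV. (if i \<noteq> j then 1 else 0) * cmod (Gm \<rho> (\<xi> i) (\<xi> j) a b))"

lemma hfun_bound:
  fixes \<rho> :: "('a::finite \<times> 'b::finite) cop"
  assumes st: "is_state \<rho>" and on: "orthonormal_basis \<xi>"
  shows "hfun \<rho> \<xi> \<le> real (CARD('b) * CARD('b) * CARD('a) * CARD('a)) * (4 * gsup \<rho> \<xi>)"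
proof -
  have g0: "0 \<le> gsup \<rho> \<xi>" by (rule gsup_props(1)[OF st on])
  have t: "(if i \<noteq> j then 1 else 0) * cmod (Gm \<rho> (\<xi> i) (\<xi> j) a b) \<le> 4 * gsup \<rho> \<xi>" for i j a b
    using Gm_bound[OF st on, of i j a b] g0 by auto
  have "hfun \<rho> \<xi> \<le> (\<Sum>i\<in>(UNIV::'b set). \<Sum>j\<in>(UNIV::'b set). \<Sum>a\<in>(UNIV::'a set). \<Sum>b\<in>(UNIV::'a set). 4 * gsup \<rho> \<xi>)"
    unfolding hfun_def by (intro sum_mono t)
  also have "\<dots> = real (CARD('b) * CARD('b) * CARD('a) * CARD('a)) * (4 * gsup \<rho> \<xi>)"
    by simp
  finally show ?thesis .
qed

lemma hfun_nonneg: "0 \<le> hfun \<rho> \<xi>"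
  unfolding hfun_def by (intro sum_nonneg) auto

lemma hfun_zero:
  assumes "hfun \<rho> \<xi> = 0" "i \<noteq> j"
  shows "Gm \<rho> (\<xi> i) (\<xi> j) a b = 0"
proof -
  let ?f = "\<lambda>i j a b. (if i \<noteq> j then 1 else 0) * cmod (Gm \<rho> (\<xi> i) (\<xi> j) a b)"
  have nn: "\<And>i j a b. 0 \<le> ?f i j a b" by auto
  have "?f i j a b \<le> (\<Sum>b'\<in>UNIV. ?f i j a b')" by (rule member_le_sum) (auto simp: nn)
  also have "\<dots> \<le> (\<Sum>a'\<in>UNIV. \<Sum>b'\<in>UNIV. ?f i j a' b')"
    by (rule member_le_sum[where f="\<lambda>a'. \<Sum>b'\<in>UNIV. ?f i j a' b'"]) (auto intro!: sum_nonneg)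
  also have "\<dots> \<le> (\<Sum>j'\<in>UNIV. \<Sum>a'\<in>UNIV. \<Sum>b'\<in>UNIV. ?f i j' a' b')"
    by (rule member_le_sum[where f="\<lambda>j'. \<Sum>a'\<in>UNIV. \<Sum>b'\<in>UNIV. ?f i j' a' b'"]) (auto intro!: sum_nonneg)
  also have "\<dots> \<le> (\<Sum>i'\<in>UNIV. \<Sum>j'\<in>UNIV. \<Sum>a'\<in>UNIV. \<Sum>b'\<in>UNIV. ?f i' j' a' b')"
    by (rule member_le_sum[where f="\<lambda>i'. \<Sum>j'\<in>UNIV. \<Sum>a'\<in>UNIV. \<Sum>b'\<in>UNIV. ?f i' j' a' b'"]) (auto intro!: sum_nonneg)
  also have "\<dots> = 0" using assms(1) by (simp add: hfun_def)
  finally show ?thesis using assms(2) by simp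
qed

lemma forward_dir:
  fixes \<rho> :: "('a::finite \<times> 'b::finite) cop"
  assumes st: "is_state \<rho>" and C0: "max_steered_coherence \<rho> = 0"
  shows "\<exists>\<xi>. orthonormal_basis \<xi> \<and> (\<forall>i j a b. i \<noteq> j \<longrightarrow> Gm \<rho> (\<xi> i) (\<xi> j) a b = 0)"
proof -
  have r: "psd \<rho>" using st by (simp add: is_state_def)
  define S where "S = ptrace_A \<rho>"
  have hS: "herm S" unfolding S_def by (rule psd_herm[OF psd_ptrace[OF r]])
  define E where "E = {X :: complex^'b^'b. is_eigenbasis S (rowf X)}"
  have E_eq: "E = {X. (\<forall>i j. cinner (\<lambda>k. X $ i $ k) (\<lambda>k. X $ j $ k) = (if i = j then 1 else 0)) \<and>
      (\<forall>i l. app S (\<lambda>k. X $ i $ k) l = bil S (\<lambda>k. X $ i $ k) (\<lambda>k. X $ i $ k) * X $ i $ l)}"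
    unfolding E_def eigenbasis_iff orthonormal_basis_def rowf_def by (auto simp: fun_eq_iff)
  have "closed E"
    unfolding E_eq app_def bil_def cinner_def
    by (intro closed_Collect_conj closed_Collect_all closed_Collect_eq continuous_intros)
  moreover have "bounded E"
  proof -
    have "norm X \<le> real CARD('b)" if "X \<in> E" for X
    proof -
      have on: "orthonormal_basis (rowf X)" using that by (simp add: E_def eigenbasis_iff)
      have n1: "norm (X $ i) = 1" for i
      proof -
        have "(norm (tov (rowf X i)))^2 = 1" using on by (simp add: norm_tov orthonormal_basis_def)
        moreover have "tov (rowf X i) = X $ i" by (simp add: rowf_def tov_def)
        ultimately show ?thesis using norm_ge_zero[of "X $ i"] by (auto simp: power2_eq_1_iff)
      qed
      have "norm X = L2_set (\<lambda>i. norm (X $ i)) UNIV" by (simp add: norm_vec_def)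
      also have "\<dots> \<le> (\<Sum>i\<in>UNIV. norm (X $ i))" by (rule L2_set_le_sum) auto
      also have "\<dots> = real CARD('b)" by (simp add: n1)
      finally show ?thesis .
    qed
    then show ?thesis unfolding bounded_iff by blast
  qed
  ultimately have cE: "compact E" by (simp add: compact_eq_bounded_closed)
  obtain \<xi>0 where e0: "orthonormal_basis \<xi>0 \<and> (\<forall>i. app S (\<xi>0 i) = (\<lambda>l. bil S (\<xi>0 i) (\<xi>0 i) * \<xi>0 i l))"
    using spectral[OF hS] by blast
  have "tomat \<xi>0 \<in> E" using e0 by (simp add: E_def eigenbasis_iff)
  then have Ene: "E \<noteq> {}" by blast
  have "continuous_on E (\<lambda>X. hfun \<rho> (rowf X))"
    unfolding hfun_def rowf_def Gm_def by (intro continuous_intros)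
  then obtain X0 where X0E: "X0 \<in> E" and X0min: "\<And>X. X \<in> E \<Longrightarrow> hfun \<rho> (rowf X0) \<le> hfun \<rho> (rowf X)"
    using continuous_attains_inf[OF cE Ene] by blast
  define K where "K = real (CARD('b) * CARD('b) * CARD('a) * CARD('a)) * 4"
  have K0: "K > 0" by (simp add: K_def)
  define G where "G = {gsup \<rho> \<xi> | \<xi>. is_eigenbasis (ptrace_A \<rho>) \<xi>}"
  have Gne: "G \<noteq> {}" using \<open>tomat \<xi>0 \<in> E\<close> by (auto simp: G_def E_def S_def)
  have InfG: "Inf G = 0" using C0 by (simp add: max_steered_gsup G_def)
  have small: "hfun \<rho> (rowf X0) \<le> K * e" if e: "e > 0" for e
  proof -
    obtain g where gG: "g \<in> G" and ge: "g < e" using cInf_lessD[OF Gne, of e] InfG e by auto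
    then obtain \<xi> where eb: "is_eigenbasis (ptrace_A \<rho>) \<xi>" and g: "g = gsup \<rho> \<xi>" by (auto simp: G_def)
    have on: "orthonormal_basis \<xi>" using eb by (simp add: is_eigenbasis_def)
    have "tomat \<xi> \<in> E" using eb by (simp add: E_def S_def)
    then have "hfun \<rho> (rowf X0) \<le> hfun \<rho> \<xi>" using X0min by fastforce
    also have "\<dots> \<le> K * gsup \<rho> \<xi>" using hfun_bound[OF st on] by (simp add: K_def)
    also have "\<dots> \<le> K * e" using ge g K0 by simp
    finally show ?thesis .
  qed
  have "hfun \<rho> (rowf X0) \<le> 0"
  proof (rule ccontr)
    assume "\<not> hfun \<rho> (rowf X0) \<le> 0"
    then have p: "hfun \<rho> (rowf X0) > 0" by simp
    have "hfun \<rho> (rowf X0) \<le> K * (hfun \<rho> (rowf X0) / (2 * K))" using small[of "hfun \<rho> (rowf X0) / (2 * K)"] p K0 by simp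
    then show False using p K0 by (simp add: field_simps)
  qed
  then have h0: "hfun \<rho> (rowf X0) = 0" using hfun_nonneg[of \<rho> "rowf X0"] by linarith
  have "orthonormal_basis (rowf X0)" using X0E by (simp add: E_def is_eigenbasis_def)
  then show ?thesis using hfun_zero[OF h0] by blast
qed

lemma op_expand:
  fixes T :: "'b::finite cop"
  assumes on: "orthonormal_basis \<xi>"
  shows "T k l = (\<Sum>i\<in>UNIV. \<Sum>j\<in>UNIV. (\<Sum>k'\<in>UNIV. \<Sum>l'\<in>UNIV. cnj (\<xi> i k') * T k' l' * \<xi> j l') * (\<xi> i k * cnj (\<xi> j l)))"
proof -
  let ?f = "\<lambda>i j k' l'. T k' l' * ((\<xi> i k * cnj (\<xi> i k')) * (\<xi> j l' * cnj (\<xi> j l)))"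
  have "(\<Sum>i\<in>UNIV. \<Sum>j\<in>UNIV. (\<Sum>k'\<in>UNIV. \<Sum>l'\<in>UNIV. cnj (\<xi> i k') * T k' l' * \<xi> j l') * (\<xi> i k * cnj (\<xi> j l)))
      = (\<Sum>i\<in>UNIV. \<Sum>j\<in>UNIV. \<Sum>k'\<in>UNIV. \<Sum>l'\<in>UNIV. ?f i j k' l')"
    unfolding sum_distrib_right by (simp add: ac_simps)
  also have "\<dots> = (\<Sum>i\<in>UNIV. \<Sum>k'\<in>UNIV. \<Sum>j\<in>UNIV. \<Sum>l'\<in>UNIV. ?f i j k' l')"
    by (rule sum.cong[OF refl], rule sum.swap)
  also have "\<dots> = (\<Sum>k'\<in>UNIV. \<Sum>i\<in>UNIV. \<Sum>j\<in>UNIV. \<Sum>l'\<in>UNIV. ?f i j k' l')"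
    by (rule sum.swap)
  also have "\<dots> = (\<Sum>k'\<in>UNIV. \<Sum>i\<in>UNIV. \<Sum>l'\<in>UNIV. \<Sum>j\<in>UNIV. ?f i j k' l')"
    by (rule sum.cong[OF refl], rule sum.cong[OF refl], rule sum.swap)
  also have "\<dots> = (\<Sum>k'\<in>UNIV. \<Sum>l'\<in>UNIV. \<Sum>i\<in>UNIV. \<Sum>j\<in>UNIV. ?f i j k' l')"
    by (rule sum.cong[OF refl], rule sum.swap)
  also have "\<dots> = (\<Sum>k'\<in>UNIV. \<Sum>l'\<in>UNIV. T k' l' * ((\<Sum>i\<in>UNIV. \<xi> i k * cnj (\<xi> i k')) * (\<Sum>j\<in>UNIV. \<xi> j l' * cnj (\<xi> j l))))"
    unfolding sum_product by (simp only: sum_distrib_left)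
  also have "\<dots> = T k l"
    by (simp add: ortho_resol[OF on] if0_simps sum.delta sum.delta')
  finally show ?thesis by simp
qed

lemma rho_expand:
  fixes \<rho> :: "('a::finite \<times> 'b::finite) cop"
  assumes on: "orthonormal_basis \<xi>" and off: "\<forall>i j a b. i \<noteq> j \<longrightarrow> Gm \<rho> (\<xi> i) (\<xi> j) a b = 0"
  shows "\<rho> (a, k) (b, l) = (\<Sum>i\<in>UNIV. Gm \<rho> (\<xi> i) (\<xi> i) a b * (\<xi> i k * cnj (\<xi> i l)))"
proof -
  have "\<rho> (a, k) (b, l) = (\<Sum>i\<in>UNIV. \<Sum>j\<in>UNIV. Gm \<rho> (\<xi> i) (\<xi> j) a b * (\<xi> i k * cnj (\<xi> j l)))"
    using op_expand[OF on, of "\<lambda>k l. \<rho> (a, k) (b, l)" k l] by (simp add: Gm_def)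
  also have "\<dots> = (\<Sum>i\<in>UNIV. Gm \<rho> (\<xi> i) (\<xi> i) a b * (\<xi> i k * cnj (\<xi> i l)))"
  proof (rule sum.cong[OF refl])
    fix i
    have "(\<Sum>j\<in>UNIV. Gm \<rho> (\<xi> i) (\<xi> j) a b * (\<xi> i k * cnj (\<xi> j l)))
        = (\<Sum>j\<in>UNIV. if j = i then Gm \<rho> (\<xi> i) (\<xi> i) a b * (\<xi> i k * cnj (\<xi> i l)) else 0)"
      by (rule sum.cong[OF refl]) (use off in auto)
    then show "(\<Sum>j\<in>UNIV. Gm \<rho> (\<xi> i) (\<xi> j) a b * (\<xi> i k * cnj (\<xi> j l))) = Gm \<rho> (\<xi> i) (\<xi> i) a b * (\<xi> i k * cnj (\<xi> i l))"
      by simp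
  qed
  finally show ?thesis .
qed

lemma quad_Gm: "quad_form (Gm \<rho> x x) w = bil \<rho> (tv w x) (tv w x)"
  using Bf_bil[of \<rho> x x w w] by (simp add: Bf_def quad_form_def)

lemma bil_uvec: "bil A (uvec a) (uvec b) = A a b"
  by (simp add: bil_def uvec_def if0_simps sum.delta)

lemma psd_zero_trace:
  fixes R :: "'n::finite cop"
  assumes "psd R" "\<forall>a. R a a = 0"
  shows "R a b = 0"
proof -
  have "2 * cmod (bil R (uvec a) (uvec b)) \<le> Re (bil R (uvec a) (uvec a)) + Re (bil R (uvec b) (uvec b))"
    by (rule psd_amgm[OF assms(1)])
  then show ?thesis using assms(2) by (simp add: bil_uvec)
qed

definition mixed :: "'n::finite cop" where
  "mixed = (\<lambda>a b. complex_of_real (1 / real CARD('n)) * op_id a b)"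

lemma mixed_state: "is_state (mixed :: 'n::finite cop)"
proof -
  have q: "quad_form (mixed :: 'n cop) v = complex_of_real (1 / real CARD('n)) * cinner v v" for v
    by (simp add: quad_form_def mixed_def cinner_def op_id_def if0_simps sum.delta sum_distrib_left ac_simps)
  have "psd (mixed :: 'n cop)"
    unfolding psd_def q by (simp add: cinner_self_real sum_nonneg del: of_real_power)
  moreover have "op_trace (mixed :: 'n cop) = 1"
    by (simp add: op_trace_def mixed_def op_id_def)
  ultimately show ?thesis by (simp add: is_state_def)
qed

lemma decomp:
  fixes \<rho> :: "('a::finite \<times> 'b::finite) cop"
  assumes st: "is_state \<rho>" and on: "orthonormal_basis \<xi>"
    and off: "\<forall>i j a b. i \<noteq> j \<longrightarrow> Gm \<rho> (\<xi> i) (\<xi> j) a b = 0"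
  shows "\<exists>(p :: 'b \<Rightarrow> real) (\<rho>A :: 'b \<Rightarrow> 'a cop). (\<forall>i. 0 \<le> p i) \<and> (\<Sum>i\<in>UNIV. p i) = 1 \<and>
       (\<forall>i. is_state (\<rho>A i)) \<and>
       \<rho> = (\<lambda>x y. \<Sum>i\<in>UNIV. complex_of_real (p i) * tensor (\<rho>A i) (ketbra (\<xi> i)) x y)"
proof -
  have r: "psd \<rho>" using st by (simp add: is_state_def)
  define R where "R i = Gm \<rho> (\<xi> i) (\<xi> i)" for i
  have Rpsd: "psd (R i)" for i
    unfolding psd_def R_def quad_Gm using bil_psd_nonneg[OF r] by (simp add: complex_is_Real_iff)
  have Rdiag: "Im (R i a a) = 0 \<and> 0 \<le> Re (R i a a)" for i a
    using bil_psd_nonneg[OF r] by (simp add: R_def Gm_self)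
  define p where "p i = Re (op_trace (R i))" for i
  have trR: "op_trace (R i) = of_real (p i)" for i
    using Rdiag by (simp add: p_def op_trace_def complex_eq_iff Im_sum)
  have p0: "0 \<le> p i" for i using Rdiag by (simp add: p_def op_trace_def Re_sum sum_nonneg)
  have exp: "\<rho> (a, k) (b, l) = (\<Sum>i\<in>UNIV. R i a b * (\<xi> i k * cnj (\<xi> i l)))" for a k b l
    unfolding R_def by (rule rho_expand[OF on off])
  have "(\<Sum>i\<in>UNIV. p i) = 1"
  proof -
    have nrm: "(\<Sum>k\<in>UNIV. \<xi> i k * cnj (\<xi> i k)) = 1" for i
      using on by (simp add: orthonormal_basis_def cinner_def mult.commute)
    have "1 = op_trace \<rho>" using st by (simp add: is_state_def)
    also have "\<dots> = (\<Sum>a\<in>UNIV. \<Sum>k\<in>UNIV. \<Sum>i\<in>UNIV. R i a a * (\<xi> i k * cnj (\<xi> i k)))"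
      by (simp add: op_trace_def sum_UNIV_prod exp)
    also have "\<dots> = (\<Sum>a\<in>UNIV. \<Sum>i\<in>UNIV. \<Sum>k\<in>UNIV. R i a a * (\<xi> i k * cnj (\<xi> i k)))"
      by (rule sum.cong[OF refl], rule sum.swap)
    also have "\<dots> = (\<Sum>a\<in>UNIV. \<Sum>i\<in>UNIV. R i a a)"
      by (simp add: sum_distrib_left[symmetric] nrm)
    also have "\<dots> = (\<Sum>i\<in>UNIV. op_trace (R i))"
      unfolding op_trace_def by (rule sum.swap)
    also have "\<dots> = of_real (\<Sum>i\<in>UNIV. p i)" by (simp add: trR)
    finally show ?thesis by (metis of_real_eq_1_iff)
  qed
  define \<rho>A where "\<rho>A i = (if p i > 0 then (\<lambda>a b. R i a b / of_real (p i)) else mixed)" for i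
  have st_i: "is_state (\<rho>A i)" for i
  proof (cases "p i > 0")
    case True
    have "psd (\<lambda>a b. R i a b / of_real (p i))"
    proof -
      have "quad_form (\<lambda>a b. R i a b / of_real (p i)) v = quad_form (R i) v / of_real (p i)" for v
        by (simp add: quad_form_def sum_divide_distrib)
      then show ?thesis using Rpsd[of i] True unfolding psd_def
        by (simp add: complex_is_Real_iff)
    qed
    moreover have "op_trace (\<lambda>a b. R i a b / of_real (p i)) = 1"
      using True trR[of i] by (simp add: op_trace_def sum_divide_distrib[symmetric])
    ultimately show ?thesis using True by (simp add: \<rho>A_def is_state_def)
  next
    case False then show ?thesis by (simp add: \<rho>A_def mixed_state)
  qed
  have pR: "of_real (p i) * \<rho>A i a b = R i a b" for i a b
  proof (cases "p i > 0")
    case True then show ?thesis by (simp add: \<rho>A_def)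
  next
    case False
    then have pz: "p i = 0" using p0[of i] by linarith
    have "\<forall>a. R i a a = 0"
    proof
      fix a
      have "(\<Sum>a'\<in>UNIV. Re (R i a' a')) = 0" using pz by (simp add: p_def op_trace_def Re_sum)
      then have "Re (R i a a) = 0" using Rdiag by (simp add: sum_nonneg_eq_0_iff)
      then show "R i a a = 0" using Rdiag by (simp add: complex_eq_iff)
    qed
    then have "R i a b = 0" by (rule psd_zero_trace[OF Rpsd])
    then show ?thesis using pz by simp
  qed
  have "\<rho> = (\<lambda>x y. \<Sum>i\<in>UNIV. complex_of_real (p i) * tensor (\<rho>A i) (ketbra (\<xi> i)) x y)"
  proof (intro ext)
    fix x y :: "'a \<times> 'b"
    obtain a k where x: "x = (a, k)" by fastforce
    obtain b l where y: "y = (b, l)" by fastforce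
    show "\<rho> x y = (\<Sum>i\<in>UNIV. complex_of_real (p i) * tensor (\<rho>A i) (ketbra (\<xi> i)) x y)"
      unfolding x y exp tensor_def ketbra_def by (simp add: mult.assoc[symmetric] pR)
  qed
  then show ?thesis using p0 \<open>(\<Sum>i\<in>UNIV. p i) = 1\<close> st_i by blast
qed

lemma backward:
  fixes \<rho> :: "('a::finite \<times> 'b::finite) cop"
  assumes st: "is_state \<rho>" and on: "orthonormal_basis \<xi>"
    and sts: "\<forall>i. is_state (\<rho>A i)"
    and dec: "\<rho> = (\<lambda>x y. \<Sum>i\<in>UNIV. complex_of_real (p i) * tensor (\<rho>A i) (ketbra (\<xi> i)) x y)"
  shows "max_steered_coherence \<rho> = 0"
proof -
  have on': "\<And>i j. cinner (\<xi> i) (\<xi> j) = (if i = j then 1 else 0)" using on by (simp add: orthonormal_basis_def)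
  define c where "c m a b = complex_of_real (p m) * \<rho>A m a b" for m a b
  have rho: "\<rho> (a, k) (b, l) = (\<Sum>m\<in>UNIV. c m a b * (\<xi> m k * cnj (\<xi> m l)))" for a k b l
    by (subst dec) (simp add: tensor_def ketbra_def c_def mult.assoc)
  have tr1: "(\<Sum>a\<in>UNIV. \<rho>A m a a) = 1" for m using sts by (simp add: is_state_def op_trace_def)
  have pt: "ptrace_A \<rho> k l = (\<Sum>m\<in>UNIV. complex_of_real (p m) * (\<xi> m k * cnj (\<xi> m l)))" for k l
  proof -
    have "ptrace_A \<rho> k l = (\<Sum>a\<in>UNIV. \<Sum>m\<in>UNIV. complex_of_real (p m) * \<rho>A m a a * (\<xi> m k * cnj (\<xi> m l)))"
      by (simp add: ptrace_A_def rho c_def)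
    also have "\<dots> = (\<Sum>m\<in>UNIV. \<Sum>a\<in>UNIV. complex_of_real (p m) * \<rho>A m a a * (\<xi> m k * cnj (\<xi> m l)))"
      by (rule sum.swap)
    also have "\<dots> = (\<Sum>m\<in>UNIV. complex_of_real (p m) * (\<Sum>a\<in>UNIV. \<rho>A m a a) * (\<xi> m k * cnj (\<xi> m l)))"
      by (simp add: sum_distrib_left sum_distrib_right)
    finally show ?thesis by (simp add: tr1)
  qed
  have eig: "is_eigenbasis (ptrace_A \<rho>) \<xi>"
    unfolding is_eigenbasis_def
  proof (intro conjI on allI exI)
    fix i k
    have "(\<Sum>l\<in>UNIV. ptrace_A \<rho> k l * \<xi> i l) = (\<Sum>l\<in>UNIV. \<Sum>m\<in>UNIV. complex_of_real (p m) * \<xi> m k * (cnj (\<xi> m l) * \<xi> i l))"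
      unfolding pt sum_distrib_right by (simp add: ac_simps)
    also have "\<dots> = (\<Sum>m\<in>UNIV. \<Sum>l\<in>UNIV. complex_of_real (p m) * \<xi> m k * (cnj (\<xi> m l) * \<xi> i l))"
      by (rule sum.swap)
    also have "\<dots> = (\<Sum>m\<in>UNIV. complex_of_real (p m) * \<xi> m k * cinner (\<xi> m) (\<xi> i))"
      by (simp add: cinner_def sum_distrib_left)
    also have "\<dots> = complex_of_real (p i) * \<xi> i k"
      by (simp add: on' if0_simps sum.delta)
    finally show "(\<Sum>l\<in>UNIV. ptrace_A \<rho> k l * \<xi> i l) = complex_of_real (p i) * \<xi> i k" .
  qed
  have Gm0: "Gm \<rho> (\<xi> i) (\<xi> j) a b = 0" if ij: "i \<noteq> j" for i j a b
  proof -
    have "Gm \<rho> (\<xi> i) (\<xi> j) a b = (\<Sum>k\<in>UNIV. \<Sum>l\<in>UNIV. \<Sum>m\<in>UNIV. c m a b * ((cnj (\<xi> i k) * \<xi> m k) * (cnj (\<xi> m l) * \<xi> j l)))"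
      unfolding Gm_def rho sum_distrib_left sum_distrib_right by (simp add: ac_simps)
    also have "\<dots> = (\<Sum>k\<in>UNIV. \<Sum>m\<in>UNIV. \<Sum>l\<in>UNIV. c m a b * ((cnj (\<xi> i k) * \<xi> m k) * (cnj (\<xi> m l) * \<xi> j l)))"
      by (rule sum.cong[OF refl], rule sum.swap)
    also have "\<dots> = (\<Sum>m\<in>UNIV. \<Sum>k\<in>UNIV. \<Sum>l\<in>UNIV. c m a b * ((cnj (\<xi> i k) * \<xi> m k) * (cnj (\<xi> m l) * \<xi> j l)))"
      by (rule sum.swap)
    also have "\<dots> = (\<Sum>m\<in>UNIV. c m a b * (cinner (\<xi> i) (\<xi> m) * cinner (\<xi> m) (\<xi> j)))"
      unfolding cinner_def sum_product by (simp only: sum_distrib_left)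
    also have "\<dots> = 0" using ij by (intro sum.neutral) (auto simp: on')
    finally show ?thesis .
  qed
  have Nc0: "Nc \<rho> \<xi> M = 0" for M
    unfolding Nc_def mat_elem_formula by (auto intro!: sum.neutral simp: Gm0)
  define S where "S = {M :: 'a cop. povm_elem M \<and> prob_M \<rho> M > 0}"
  have Sne: "S \<noteq> {}" using st by (auto simp: S_def povm_id prob_id is_state_def intro!: exI[of _ op_id])
  have g0: "gsup \<rho> \<xi> = 0"
  proof -
    have "gsup \<rho> \<xi> = (SUP M\<in>S. (0::real))"
      unfolding gsup_def S_def[symmetric] by (rule SUP_cong) (simp_all add: coh_Nc Nc0)
    then show ?thesis using Sne by simp
  qed
  show ?thesis unfolding max_steered_gsup
  proof (rule cInf_eq_minimum)
    show "0 \<in> {gsup \<rho> \<xi> |\<xi>. is_eigenbasis (ptrace_A \<rho>) \<xi>}" using eig g0 by force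
    show "\<And>x. x \<in> {gsup \<rho> \<xi> |\<xi>. is_eigenbasis (ptrace_A \<rho>) \<xi>} \<Longrightarrow> 0 \<le> x"
      using gsup_props(1)[OF st] by (auto simp: is_eigenbasis_def)
  qed
qed

theorem mainTheorem1:
  fixes \<rho> :: "('a::finite \<times> 'b::finite) cop"
  assumes "is_state \<rho>"
  shows "max_steered_coherence \<rho> = 0 \<longleftrightarrow>
    (\<exists>(\<xi> :: 'b \<Rightarrow> ('b \<Rightarrow> complex)) (p :: 'b \<Rightarrow> real) (\<rho>A :: 'b \<Rightarrow> 'a cop).
       orthonormal_basis \<xi> \<and> (\<forall>i. 0 \<le> p i) \<and> (\<Sum>i\<in>UNIV. p i) = 1 \<and>
       (\<forall>i. is_state (\<rho>A i)) \<and>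
       \<rho> = (\<lambda>x y. \<Sum>i\<in>UNIV. complex_of_real (p i) * tensor (\<rho>A i) (ketbra (\<xi> i)) x y))"
proof
  assume "max_steered_coherence \<rho> = 0"
  then obtain \<xi> where on: "orthonormal_basis \<xi>" and off: "\<forall>i j a b. i \<noteq> j \<longrightarrow> Gm \<rho> (\<xi> i) (\<xi> j) a b = 0"
    using forward_dir[OF assms] by blast
  show "\<exists>(\<xi> :: 'b \<Rightarrow> ('b \<Rightarrow> complex)) (p :: 'b \<Rightarrow> real) (\<rho>A :: 'b \<Rightarrow> 'a cop).
       orthonormal_basis \<xi> \<and> (\<forall>i. 0 \<le> p i) \<and> (\<Sum>i\<in>UNIV. p i) = 1 \<and>
       (\<forall>i. is_state (\<rho>A i)) \<and>
       \<rho> = (\<lambda>x y. \<Sum>i\<in>UNIV. complex_of_real (p i) * tensor (\<rho>A i) (ketbra (\<xi> i)) x y)"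
    using decomp[OF assms on off] on by blast
next
  assume "\<exists>(\<xi> :: 'b \<Rightarrow> ('b \<Rightarrow> complex)) (p :: 'b \<Rightarrow> real) (\<rho>A :: 'b \<Rightarrow> 'a cop).
       orthonormal_basis \<xi> \<and> (\<forall>i. 0 \<le> p i) \<and> (\<Sum>i\<in>UNIV. p i) = 1 \<and>
       (\<forall>i. is_state (\<rho>A i)) \<and>
       \<rho> = (\<lambda>x y. \<Sum>i\<in>UNIV. complex_of_real (p i) * tensor (\<rho>A i) (ketbra (\<xi> i)) x y)"
  then obtain \<xi> p \<rho>A where on: "orthonormal_basis \<xi>" and sts: "\<forall>i. is_state (\<rho>A i)"
    and dec: "\<rho> = (\<lambda>x y. \<Sum>i\<in>UNIV. complex_of_real (p i) * tensor (\<rho>A i) (ketbra (\<xi> i)) x y)"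
    by blast
  show "max_steered_coherence \<rho> = 0" by (rule backward[OF assms on sts dec])
qed

end
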